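(* Let $G_1,G_2$ be $3$-edge colorable cubic graphs, and let $G_1\,Y\,G_2$ and $G_1\,H\,G_2$ be particular compositions of them. Let $c_1,c_2$ be proper $3$-edge colorings of $G_1$ and $d_1,d_2$ proper $3$-edge colorings of $G_2$. If $(c_1\,Y\,d_1)\sim(c_2\,Y\,d_2)$ in $G_1\,Y\,G_2$ (respectively $(c_1\,H\,d_1)\sim(c_2\,H\,d_2)$ in $G_1\,H\,G_2$), then $c_1\sim c_2$ in $G_1$ and $d_1\sim d_2$ in $G_2$.
   Context: Graphs are finite; multiple edges allowed, loops not. Proper $3$-edge colorings use colors $\{1,2,3\}$, adjacent edges receiving different colors. For colors $a\neq b$, an edge-Kempe chain is a connected component of the subgraph of edges colored $a$ or $b$; an edge-Kempe switch swaps $a,b$ on one chain; $\sim$ denotes equivalence under finite sequences of such switches. Composition Y: choose $v_1\in G_1$ with incident edges $x_j=v_1s_{1j}$ and $v_2\in G_2$ with incident edges $y_j=v_2s_{2j}$ ($j=1,2,3$); $G_1\,Y\,G_2$ deletes $v_1,v_2$ and adds edges $s_{1j}s_{2j}$. Composition H: choose edges $x=s_{11}s_{12}\in G_1$, $y=s_{21}s_{22}\in G_2$; $G_1\,H\,G_2$ deletes $x,y$ and adds $s_{11}s_{21},s_{12}s_{22}$. For proper $3$-edge colorings $c$ of $G_1$, $d$ of $G_2$: let $\hat d$ be obtained from $d$ by a global color permutation with $\hat d(y_j)=c(x_j)$; $c\,Y\,d$ colors $G_1-v_1$ by $c$, $G_2-v_2$ by $\hat d$, and $s_{1j}s_{2j}$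 by $c(x_j)$. Let $\tilde d$ be obtained from $d$ by a global color permutation with $\tilde d(y)=c(x)$; $c\,H\,d$ colors $G_1-x$ by $c$, $G_2-y$ by $\tilde d$, and both new edges by $c(x)$. *)

theory Defs
  imports Main
begin

text \<open>Finite multigraphs without loops: a vertex set, an edge set, and for every
edge its set of (exactly two) endpoints. Parallel edges are allowed.\<close>

record ('v, 'e) mgraph =
  verts :: "'v set"
  edges :: "'e set"
  ends  :: "'e \<Rightarrow> 'v set"

definition multigraph :: "('v, 'e) mgraph \<Rightarrow> bool" where
  "multigraph G \<longleftrightarrow> finite (verts G) \<and> finite (edges G) \<and>
     (\<forall>e\<in>edges G. ends G e \<subseteq> verts G \<and> card (ends G e) = 2)"

definition incident_edges :: "('v, 'e) mgraph \<Rightarrow> 'v \<Rightarrow> 'e set" where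
  "incident_edges G v = {e \<in> edges G. v \<in> ends G e}"

definition cubic :: "('v, 'e) mgraph \<Rightarrow> bool" where
  "cubic G \<longleftrightarrow> multigraph G \<and> (\<forall>v\<in>verts G. card (incident_edges G v) = 3)"

text \<open>Proper 3-edge colourings with colours 1,2,3 (values outside the edge set are irrelevant).\<close>

definition proper_3col :: "('v, 'e) mgraph \<Rightarrow> ('e \<Rightarrow> nat) \<Rightarrow> bool" where
  "proper_3col G c \<longleftrightarrow> (\<forall>e\<in>edges G. c e \<in> {1,2,3}) \<and>
     (\<forall>e\<in>edges G. \<forall>f\<in>edges G. e \<noteq> f \<and> ends G e \<inter> ends G f \<noteq> {} \<longrightarrow> c e \<noteq> c f)"

definition three_edge_colorable :: "('v, 'e) mgraph \<Rightarrow> bool" where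
  "three_edge_colorable G \<longleftrightarrow> (\<exists>c. proper_3col G c)"

definition kempe_adj :: "('v, 'e) mgraph \<Rightarrow> ('e \<Rightarrow> nat) \<Rightarrow> nat \<Rightarrow> nat \<Rightarrow> 'e \<Rightarrow> 'e \<Rightarrow> bool" where
  "kempe_adj G c a b e f \<longleftrightarrow> e \<in> edges G \<and> f \<in> edges G \<and> c e \<in> {a, b} \<and> c f \<in> {a, b} \<and>
     ends G e \<inter> ends G f \<noteq> {}"

definition kempe_chain :: "('v, 'e) mgraph \<Rightarrow> ('e \<Rightarrow> nat) \<Rightarrow> nat \<Rightarrow> nat \<Rightarrow> 'e \<Rightarrow> 'e set" where
  "kempe_chain G c a b e = {f. (kempe_adj G c a b)\<^sup>*\<^sup>* e f}"

definition swap_col :: "nat \<Rightarrow> nat \<Rightarrow> nat \<Rightarrow> nat" where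
  "swap_col a b k = (if k = a then b else if k = b then a else k)"

definition kempe_step :: "('v, 'e) mgraph \<Rightarrow> ('e \<Rightarrow> nat) \<Rightarrow> ('e \<Rightarrow> nat) \<Rightarrow> bool" where
  "kempe_step G c c' \<longleftrightarrow> (\<exists>a b e. a \<in> {1,2,3} \<and> b \<in> {1,2,3} \<and> a \<noteq> b \<and>
      e \<in> edges G \<and> c e \<in> {a, b} \<and>
      c' = (\<lambda>f. if f \<in> kempe_chain G c a b e then swap_col a b (c f) else c f))"

definition kempe_equiv :: "('v, 'e) mgraph \<Rightarrow> ('e \<Rightarrow> nat) \<Rightarrow> ('e \<Rightarrow> nat) \<Rightarrow> bool" where
  "kempe_equiv G c c' \<longleftrightarrow> (\<exists>c''. (kempe_step G)\<^sup>*\<^sup>* c c'' \<and> (\<forall>e\<in>edges G. c'' e = c' e))"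

definition other_end :: "('v, 'e) mgraph \<Rightarrow> 'e \<Rightarrow> 'v \<Rightarrow> 'v" where
  "other_end G e v = (THE u. ends G e = {v, u})"

text \<open>The incident edges of v1 are x 1, x 2, x 3 and those of v2 are y 1, y 2, y 3.
Edges of the result: Inl (Inl e) old edges of G1, Inl (Inr e) old edges of G2,
Inr j (j = 1,2,3) the new edge s_{1j} s_{2j}.\<close>

definition valid_Y_choice :: "('v, 'e) mgraph \<Rightarrow> 'v \<Rightarrow> (nat \<Rightarrow> 'e) \<Rightarrow> bool" where
  "valid_Y_choice G v x \<longleftrightarrow> v \<in> verts G \<and> bij_betw x {1,2,3} (incident_edges G v)"

definition compY ::
  "('v1, 'e1) mgraph \<Rightarrow> 'v1 \<Rightarrow> (nat \<Rightarrow> 'e1) \<Rightarrow> ('v2, 'e2) mgraph \<Rightarrow> 'v2 \<Rightarrow> (nat \<Rightarrow> 'e2)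
     \<Rightarrow> ('v1 + 'v2, ('e1 + 'e2) + nat) mgraph" where
  "compY G1 v1 x G2 v2 y =
     \<lparr> verts = Inl ` (verts G1 - {v1}) \<union> Inr ` (verts G2 - {v2}),
       edges = Inl ` Inl ` (edges G1 - incident_edges G1 v1)
             \<union> Inl ` Inr ` (edges G2 - incident_edges G2 v2) \<union> Inr ` {1,2,3},
       ends = (\<lambda>E. case E of
                 Inl (Inl e) \<Rightarrow> Inl ` ends G1 e
               | Inl (Inr e) \<Rightarrow> Inr ` ends G2 e
               | Inr j \<Rightarrow> {Inl (other_end G1 (x j) v1), Inr (other_end G2 (y j) v2)}) \<rparr>"

text \<open>c Y d, where sigma is the global colour permutation with sigma (d (y j)) = c (x j).\<close>

definition colY :: "(nat \<Rightarrow> 'e1) \<Rightarrow> ('e1 \<Rightarrow> nat) \<Rightarrow> (nat \<Rightarrow> nat) \<Rightarrow> ('e2 \<Rightarrow> nat)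
     \<Rightarrow> ('e1 + 'e2) + nat \<Rightarrow> nat" where
  "colY x c \<sigma> d = (\<lambda>E. case E of
       Inl (Inl e) \<Rightarrow> c e
     | Inl (Inr e) \<Rightarrow> \<sigma> (d e)
     | Inr j \<Rightarrow> c (x j))"

text \<open>Composition H: edge x with endpoints s11, s12 in G1, edge y with endpoints s21, s22
in G2; new edges Inr 1 = s11 s21 and Inr 2 = s12 s22.\<close>

definition valid_H_choice :: "('v, 'e) mgraph \<Rightarrow> 'e \<Rightarrow> 'v \<Rightarrow> 'v \<Rightarrow> bool" where
  "valid_H_choice G x s1 s2 \<longleftrightarrow> x \<in> edges G \<and> ends G x = {s1, s2}"

definition compH ::
  "('v1, 'e1) mgraph \<Rightarrow> 'e1 \<Rightarrow> 'v1 \<Rightarrow> 'v1 \<Rightarrow> ('v2, 'e2) mgraph \<Rightarrow> 'e2 \<Rightarrow> 'v2 \<Rightarrow> 'v2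
     \<Rightarrow> ('v1 + 'v2, ('e1 + 'e2) + nat) mgraph" where
  "compH G1 x s11 s12 G2 y s21 s22 =
     \<lparr> verts = Inl ` verts G1 \<union> Inr ` verts G2,
       edges = Inl ` Inl ` (edges G1 - {x}) \<union> Inl ` Inr ` (edges G2 - {y}) \<union> Inr ` {1,2},
       ends = (\<lambda>E. case E of
                 Inl (Inl e) \<Rightarrow> Inl ` ends G1 e
               | Inl (Inr e) \<Rightarrow> Inr ` ends G2 e
               | Inr j \<Rightarrow> (if j = 1 then {Inl s11, Inr s21} else {Inl s12, Inr s22})) \<rparr>"

text \<open>c H d, where sigma is a global colour permutation with sigma (d y) = c x.\<close>

definition colH :: "'e1 \<Rightarrow> ('e1 \<Rightarrow> nat) \<Rightarrow> (nat \<Rightarrow> nat) \<Rightarrow> ('e2 \<Rightarrow> nat)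
     \<Rightarrow> ('e1 + 'e2) + nat \<Rightarrow> nat" where
  "colH x c \<sigma> d = (\<lambda>E. case E of
       Inl (Inl e) \<Rightarrow> c e
     | Inl (Inr e) \<Rightarrow> \<sigma> (d e)
     | Inr j \<Rightarrow> c x)"

end

theory Submission
  imports Defs
begin


definition swapU :: "'e set \<Rightarrow> nat \<Rightarrow> nat \<Rightarrow> ('e \<Rightarrow> nat) \<Rightarrow> 'e \<Rightarrow> nat" where
  "swapU U a b c = (\<lambda>f. if f \<in> U then swap_col a b (c f) else c f)"

definition eqE :: "('v,'e) mgraph \<Rightarrow> ('e \<Rightarrow> nat) \<Rightarrow> ('e \<Rightarrow> nat) \<Rightarrow> bool" where
  "eqE G c d \<longleftrightarrow> (\<forall>e\<in>edges G. c e = d e)"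

lemma kempe_adj_cong: "eqE G c d \<Longrightarrow> kempe_adj G c a b = kempe_adj G d a b"
  by (auto simp: eqE_def kempe_adj_def fun_eq_iff)

lemma kempe_chain_cong: "eqE G c d \<Longrightarrow> kempe_chain G c a b e = kempe_chain G d a b e"
  unfolding kempe_chain_def using kempe_adj_cong by metis

lemma kempe_step_sim:
  assumes "kempe_step G c c'" "eqE G c d"
  shows "\<exists>d'. kempe_step G d d' \<and> eqE G c' d'"
proof -
  obtain a b e where ab: "a \<in> {1,2,3}" "b \<in> {1,2,3}" "a \<noteq> b" "e \<in> edges G" "c e \<in> {a, b}"
    and c': "c' = (\<lambda>f. if f \<in> kempe_chain G c a b e then swap_col a b (c f) else c f)"
    using assms(1) unfolding kempe_step_def by blast
  define d' where "d' = (\<lambda>f. if f \<in> kempe_chain G d a b e then swap_col a b (d f) else d f)"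
  have "d e = c e" using assms(2) ab(4) by (simp add: eqE_def)
  hence "kempe_step G d d'" unfolding kempe_step_def d'_def using ab
    by (intro exI[of _ a] exI[of _ b] exI[of _ e]) simp
  moreover have "eqE G c' d'" unfolding eqE_def c' d'_def
    using assms(2) kempe_chain_cong[OF assms(2), of a b e] by (simp add: eqE_def)
  ultimately show ?thesis by blast
qed

lemma rtrancl_sim:
  assumes "(kempe_step G)\<^sup>*\<^sup>* c c'" "eqE G c d"
  shows "\<exists>d'. (kempe_step G)\<^sup>*\<^sup>* d d' \<and> eqE G c' d'"
  using assms
proof (induction rule: rtranclp_induct)
  case base then show ?case by blast
next
  case (step y z)
  then obtain d1 where "(kempe_step G)\<^sup>*\<^sup>* d d1" "eqE G y d1" by blast
  moreover obtain d2 where "kempe_step G d1 d2" "eqE G z d2"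
    using kempe_step_sim[OF step(2) \<open>eqE G y d1\<close>] by blast
  ultimately show ?case by (meson rtranclp.rtrancl_into_rtrancl)
qed

lemma eqE_refl: "eqE G c c" by (simp add: eqE_def)
lemma eqE_sym: "eqE G c d \<Longrightarrow> eqE G d c" by (simp add: eqE_def)
lemma eqE_trans: "eqE G c d \<Longrightarrow> eqE G d e \<Longrightarrow> eqE G c e" by (simp add: eqE_def)

lemma kempe_equiv_eqE: "eqE G c d \<Longrightarrow> kempe_equiv G c d"
  unfolding kempe_equiv_def eqE_def by blast

lemma kempe_equiv_trans:
  assumes "kempe_equiv G c d" "kempe_equiv G d e"
  shows "kempe_equiv G c e"
proof -
  obtain c1 where c1: "(kempe_step G)\<^sup>*\<^sup>* c c1" "eqE G c1 d"
    using assms(1) unfolding kempe_equiv_def eqE_def by blast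
  obtain d1 where d1: "(kempe_step G)\<^sup>*\<^sup>* d d1" "eqE G d1 e"
    using assms(2) unfolding kempe_equiv_def eqE_def by blast
  obtain c2 where "(kempe_step G)\<^sup>*\<^sup>* c1 c2" "eqE G d1 c2"
    using rtrancl_sim[OF d1(1) eqE_sym[OF c1(2)]] by blast
  then show ?thesis using c1 d1 unfolding kempe_equiv_def eqE_def
    by (metis rtranclp_trans)
qed

lemma kempe_step_equiv: "kempe_step G c d \<Longrightarrow> kempe_equiv G c d"
  unfolding kempe_equiv_def by blast

lemma chain_self: "e \<in> kempe_chain G c a b e"
  by (simp add: kempe_chain_def)

lemma chain_closed: "f \<in> kempe_chain G c a b e \<Longrightarrow> kempe_adj G c a b f g \<Longrightarrow> g \<in> kempe_chain G c a b e"
  unfolding kempe_chain_def by (simp add: rtranclp.rtrancl_into_rtrancl)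

lemma kempe_adj_sym: "kempe_adj G c a b e f \<Longrightarrow> kempe_adj G c a b f e"
  unfolding kempe_adj_def by blast

lemma chain_props:
  assumes "e \<in> edges G" "c e \<in> {a,b}" "f \<in> kempe_chain G c a b e"
  shows "f \<in> edges G \<and> c f \<in> {a,b}"
proof -
  have "(kempe_adj G c a b)\<^sup>*\<^sup>* e f" using assms(3) by (simp add: kempe_chain_def)
  then show ?thesis
    by (induction rule: rtranclp_induct) (use assms in \<open>auto simp: kempe_adj_def\<close>)
qed

lemma swap_col_in: "swap_col a b k \<in> {a,b} \<longleftrightarrow> k \<in> {a,b}"
  by (auto simp: swap_col_def)

lemma swapU_in: "swapU K a b c f \<in> {a,b} \<longleftrightarrow> c f \<in> {a,b}"
  unfolding swapU_def using swap_col_in[of a b "c f"] by simp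

lemma kempe_adj_swapU: "kempe_adj G (swapU K a b c) a b = kempe_adj G c a b"
  unfolding kempe_adj_def fun_eq_iff swapU_in by simp

lemma swap_union:
  assumes "finite U" "U \<subseteq> edges G" "\<forall>e\<in>U. c e \<in> {a,b}"
    "\<forall>e\<in>U. \<forall>f. kempe_adj G c a b e f \<longrightarrow> f \<in> U" "a\<in>{1,2,3}" "b\<in>{1,2,3}" "a\<noteq>b"
  shows "kempe_equiv G c (swapU U a b c)"
  using assms
proof (induction "card U" arbitrary: U c rule: less_induct)
  case less
  show ?case
  proof (cases "U = {}")
    case True
    then show ?thesis by (intro kempe_equiv_eqE) (simp add: eqE_def swapU_def)
  next
    case False
    then obtain e where e: "e \<in> U" by blast
    define K where "K = kempe_chain G c a b e"
    have KU: "K \<subseteq> U"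
    proof
      fix f assume "f \<in> K"
      hence "(kempe_adj G c a b)\<^sup>*\<^sup>* e f" by (simp add: K_def kempe_chain_def)
      then show "f \<in> U" by (induction rule: rtranclp_induct) (use less.prems e in auto)
    qed
    define c1 where "c1 = swapU K a b c"
    have st: "kempe_step G c c1" unfolding kempe_step_def c1_def swapU_def K_def
      using less.prems e by blast
    define U' where "U' = U - K"
    have lt: "card U' < card U" unfolding U'_def using e chain_self[of e G c a b] K_def less.prems(1) KU
      by (metis Diff_iff card_Diff_subset card_gt_0_iff diff_less empty_iff finite_subset)
    have "kempe_equiv G c1 (swapU U' a b c1)"
    proof (rule less.hyps[OF lt])
      show "finite U'" using less.prems(1) by (simp add: U'_def)
      show "U' \<subseteq> edges G" using less.prems(2) by (auto simp: U'_def)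
      show "\<forall>e\<in>U'. c1 e \<in> {a,b}" using less.prems(3) by (auto simp: U'_def c1_def swapU_def)
      show "\<forall>e\<in>U'. \<forall>f. kempe_adj G c1 a b e f \<longrightarrow> f \<in> U'"
      proof (intro ballI allI impI)
        fix e' f assume "e' \<in> U'" "kempe_adj G c1 a b e' f"
        hence adj: "kempe_adj G c a b e' f" by (simp add: c1_def kempe_adj_swapU)
        hence "f \<in> U" using less.prems(4) \<open>e' \<in> U'\<close> by (auto simp: U'_def)
        moreover have "f \<notin> K"
        proof
          assume "f \<in> K"
          hence "e' \<in> K" using chain_closed[OF _ kempe_adj_sym[OF adj]] by (simp add: K_def)
          thus False using \<open>e' \<in> U'\<close> by (simp add: U'_def)
        qed
        ultimately show "f \<in> U'" by (simp add: U'_def)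
      qed
    qed (use less.prems in auto)
    moreover have "swapU U' a b c1 = swapU U a b c"
      using KU by (auto simp: swapU_def c1_def U'_def fun_eq_iff)
    ultimately show ?thesis using kempe_equiv_trans kempe_step_equiv[OF st] by metis
  qed
qed


lemma step_proper:
  assumes "kempe_step G c c'" "proper_3col G c"
  shows "proper_3col G c'"
proof -
  obtain a b e where ab: "a \<in> {1,2,3}" "b \<in> {1,2,3}" "a \<noteq> b" "e \<in> edges G" "c e \<in> {a, b}"
    and c': "c' = swapU (kempe_chain G c a b e) a b c"
    using assms(1) unfolding kempe_step_def swapU_def by blast
  define K where "K = kempe_chain G c a b e"
  have Kc: "\<And>f. f \<in> K \<Longrightarrow> c f \<in> {a,b}" using chain_props[of e G c a b] ab(4,5) K_def by blast
  show ?thesis unfolding proper_3col_def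
  proof (intro conjI ballI impI)
    fix f assume "f \<in> edges G"
    then show "c' f \<in> {1,2,3}" using assms(2) ab Kc[of f] unfolding proper_3col_def c' swapU_def K_def[symmetric]
      by (auto simp: swap_col_def)
  next
    fix f g assume fg: "f \<in> edges G" "g \<in> edges G" "f \<noteq> g \<and> ends G f \<inter> ends G g \<noteq> {}"
    have ne: "c f \<noteq> c g" using assms(2) fg unfolding proper_3col_def by blast
    have inj: "swap_col a b (c f) \<noteq> swap_col a b (c g)" using ne by (auto simp: swap_col_def split: if_splits)
    have "f \<in> K \<longleftrightarrow> g \<in> K" if "c f \<in> {a,b}" "c g \<in> {a,b}"
    proof
      assume "f \<in> K" then show "g \<in> K" using chain_closed[of f G c a b e g] fg that
        by (auto simp: K_def kempe_adj_def)
    next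
      assume "g \<in> K" then show "f \<in> K" using chain_closed[of g G c a b e f] fg that
        by (auto simp: K_def kempe_adj_def)
    qed
    then show "c' f \<noteq> c' g" using ne inj Kc[of f] Kc[of g] unfolding c' swapU_def K_def[symmetric]
      by (auto simp: swap_col_def split: if_splits)
  qed
qed



lemma card_filter_sum: "finite A \<Longrightarrow> card {x\<in>A. P x} = (\<Sum>x\<in>A. if P x then 1 else 0)"
  using sum.inter_filter[of A "\<lambda>_. 1::nat" P] by simp

lemma global_swap:
  assumes "finite (edges G)" "a\<in>{1,2,3}" "b\<in>{1,2,3}"
  shows "kempe_equiv G c (swap_col a b \<circ> c)"
proof (cases "a = b")
  case True
  then show ?thesis by (intro kempe_equiv_eqE) (simp add: eqE_def swap_col_def)
next
  case False
  define U where "U = {e\<in>edges G. c e \<in> {a,b}}"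
  have k1: "kempe_equiv G c (swapU U a b c)"
  proof (rule swap_union)
    show "\<forall>e\<in>U. \<forall>f. kempe_adj G c a b e f \<longrightarrow> f \<in> U"
      unfolding U_def kempe_adj_def by blast
  qed (use assms False in \<open>simp_all add: U_def\<close>)
  have k2: "eqE G (swapU U a b c) (swap_col a b \<circ> c)"
    unfolding eqE_def swapU_def U_def swap_col_def by simp
  show ?thesis by (rule kempe_equiv_trans[OF k1 kempe_equiv_eqE[OF k2]])
qed

lemma perm3:
  assumes "bij_betw \<sigma> {1,2,3} {1,2,3::nat}" "k \<in> {1,2,3}"
  shows "\<sigma> k = swap_col 1 (\<sigma> 1) (swap_col 2 (swap_col 1 (\<sigma> 1) (\<sigma> 2)) k)"
proof -
  have r: "\<sigma> 1 \<in> {1,2,3}" "\<sigma> 2 \<in> {1,2,3}" "\<sigma> 3 \<in> {1,2,3}"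
    using assms(1) by (auto simp: bij_betw_def)
  have inj: "inj_on \<sigma> {1,2,3}" using assms(1) by (simp add: bij_betw_def)
  have i: "\<sigma> 1 \<noteq> \<sigma> 2" "\<sigma> 1 \<noteq> \<sigma> 3" "\<sigma> 2 \<noteq> \<sigma> 3"
    using inj_onD[OF inj, of 1 2] inj_onD[OF inj, of 1 3] inj_onD[OF inj, of 2 3] by auto
  from r(1) have "\<sigma> 1 = 1 \<or> \<sigma> 1 = 2 \<or> \<sigma> 1 = 3" by simp
  moreover from r(2) have "\<sigma> 2 = 1 \<or> \<sigma> 2 = 2 \<or> \<sigma> 2 = 3" by simp
  moreover from r(3) have "\<sigma> 3 = 1 \<or> \<sigma> 3 = 2 \<or> \<sigma> 3 = 3" by simp
  moreover from assms(2) have "k = 1 \<or> k = 2 \<or> k = 3" by simp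
  ultimately show ?thesis using i by (elim disjE) (simp_all add: swap_col_def)
qed

lemma perm_equiv:
  assumes "finite (edges G)" "bij_betw \<sigma> {1,2,3} {1,2,3::nat}" "\<forall>e\<in>edges G. c e \<in> {1,2,3}"
  shows "kempe_equiv G c (\<sigma> \<circ> c)"
proof -
  define a' where "a' = swap_col 1 (\<sigma> 1) (\<sigma> 2)"
  have s1: "\<sigma> 1 \<in> {1,2,3}" "\<sigma> 2 \<in> {1,2,3}" using assms(2) by (auto simp: bij_betw_def)
  have a': "a' \<in> {1,2,3}" using s1 by (auto simp: a'_def swap_col_def)
  have k1: "kempe_equiv G c (swap_col 2 a' \<circ> c)" by (rule global_swap) (use assms a' in auto)
  have k2: "kempe_equiv G (swap_col 2 a' \<circ> c) (swap_col 1 (\<sigma> 1) \<circ> (swap_col 2 a' \<circ> c))"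
    by (rule global_swap) (use assms s1 in auto)
  have k3: "eqE G (swap_col 1 (\<sigma> 1) \<circ> (swap_col 2 a' \<circ> c)) (\<sigma> \<circ> c)"
    unfolding eqE_def
  proof
    fix e assume "e \<in> edges G"
    then have "c e \<in> {1,2,3}" using assms(3) by blast
    from perm3[OF assms(2) this] show "(swap_col 1 (\<sigma> 1) \<circ> (swap_col 2 a' \<circ> c)) e = (\<sigma> \<circ> c) e"
      by (simp add: a'_def)
  qed
  show ?thesis by (rule kempe_equiv_trans[OF k1 kempe_equiv_trans[OF k2 kempe_equiv_eqE[OF k3]]])
qed

lemma proj_rtrancl:
  fixes \<Gamma> :: "('V,'E) mgraph" and G :: "('v,'e) mgraph" and \<pi> :: "'e \<Rightarrow> 'E"
  assumes "(kempe_step \<Gamma>)\<^sup>*\<^sup>* C C2" "proper_3col \<Gamma> C" "finite (edges G)"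
   and clos: "\<And>C C' a b e0 e f. proper_3col \<Gamma> C \<Longrightarrow> proper_3col \<Gamma> C' \<Longrightarrow> a\<in>{1,2,3} \<Longrightarrow> b\<in>{1,2,3} \<Longrightarrow>
      a\<noteq>b \<Longrightarrow> e0 \<in> edges \<Gamma> \<Longrightarrow> C e0 \<in> {a,b} \<Longrightarrow> C' = swapU (kempe_chain \<Gamma> C a b e0) a b C \<Longrightarrow>
      e\<in>edges G \<Longrightarrow> f\<in>edges G \<Longrightarrow> ends G e \<inter> ends G f \<noteq> {} \<Longrightarrow>
      \<pi> e \<in> kempe_chain \<Gamma> C a b e0 \<Longrightarrow> C (\<pi> f) \<in> {a,b} \<Longrightarrow> \<pi> f \<in> kempe_chain \<Gamma> C a b e0"
  shows "kempe_equiv G (C \<circ> \<pi>) (C2 \<circ> \<pi>) \<and> proper_3col \<Gamma> C2"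
  using assms(1)
proof (induction rule: rtranclp_induct)
  case base
  show ?case using assms(2) kempe_equiv_eqE[OF eqE_refl] by simp
next
  case (step C1 C2)
  have p1: "proper_3col \<Gamma> C1" using step.IH by blast
  have ih: "kempe_equiv G (C \<circ> \<pi>) (C1 \<circ> \<pi>)" using step.IH by blast
  have p2: "proper_3col \<Gamma> C2" using step_proper[OF step(2) p1] .
  obtain a b e0 where ab: "a \<in> {1,2,3}" "b \<in> {1,2,3}" "a \<noteq> b" "e0 \<in> edges \<Gamma>" "C1 e0 \<in> {a, b}"
    and c': "C2 = swapU (kempe_chain \<Gamma> C1 a b e0) a b C1"
    using step(2) unfolding kempe_step_def swapU_def by blast
  define K where "K = kempe_chain \<Gamma> C1 a b e0"
  define U where "U = {e\<in>edges G. \<pi> e \<in> K}"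
  have k1: "kempe_equiv G (C1 \<circ> \<pi>) (swapU U a b (C1 \<circ> \<pi>))"
  proof (rule swap_union)
    show "finite U" using assms(3) by (simp add: U_def)
    show "U \<subseteq> edges G" by (simp add: U_def)
    show "\<forall>e\<in>U. (C1 \<circ> \<pi>) e \<in> {a,b}"
    proof
      fix e assume "e \<in> U"
      hence "\<pi> e \<in> K" by (simp add: U_def)
      thus "(C1 \<circ> \<pi>) e \<in> {a,b}" using chain_props[of e0 \<Gamma> C1 a b "\<pi> e"] ab(4,5) by (simp add: K_def)
    qed
    show "\<forall>e\<in>U. \<forall>f. kempe_adj G (C1 \<circ> \<pi>) a b e f \<longrightarrow> f \<in> U"
    proof (intro ballI allI impI)
      fix e f assume eU: "e \<in> U" and adj: "kempe_adj G (C1 \<circ> \<pi>) a b e f"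
      have e: "e \<in> edges G" "\<pi> e \<in> K" using eU by (simp_all add: U_def)
      have f: "f \<in> edges G" "ends G e \<inter> ends G f \<noteq> {}" "C1 (\<pi> f) \<in> {a,b}"
        using adj by (simp_all add: kempe_adj_def)
      have "\<pi> f \<in> K" using clos[OF p1 p2 ab c' e(1) f(1) f(2) e(2)[unfolded K_def] f(3)] by (simp add: K_def)
      thus "f \<in> U" using f(1) by (simp add: U_def)
    qed
  qed (use ab in simp_all)
  have k2: "eqE G (swapU U a b (C1 \<circ> \<pi>)) (C2 \<circ> \<pi>)"
    unfolding eqE_def
  proof
    fix e assume "e \<in> edges G"
    then show "swapU U a b (C1 \<circ> \<pi>) e = (C2 \<circ> \<pi>) e"
      unfolding c' by (simp add: swapU_def U_def K_def)
  qed
  have "kempe_equiv G (C \<circ> \<pi>) (C2 \<circ> \<pi>)"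
    by (rule kempe_equiv_trans[OF ih kempe_equiv_trans[OF k1 kempe_equiv_eqE[OF k2]]])
  then show ?case using p2 by blast
qed

lemma handshake:
  fixes G :: "('v,'e) mgraph" and col :: "'v \<Rightarrow> 'e \<Rightarrow> nat"
  assumes fin: "finite (edges G)" "finite W"
    and deg: "\<And>u. u\<in>W \<Longrightarrow> card (incident_edges G u) = 3"
    and inj: "\<And>u. u\<in>W \<Longrightarrow> inj_on (col u) (incident_edges G u)"
    and rng: "\<And>u e. u\<in>W \<Longrightarrow> e \<in> incident_edges G u \<Longrightarrow> col u e \<in> {1,2,3}"
    and a: "a \<in> {1,2,3}"
  shows "(\<Sum>e\<in>edges G. card {u\<in>W. u \<in> ends G e \<and> col u e = a}) = card W"
proof -
  have one: "card {e\<in>incident_edges G u. col u e = a} = 1" if u: "u \<in> W" for u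
  proof -
    have fi: "finite (incident_edges G u)" using fin by (simp add: incident_edges_def)
    have "col u ` incident_edges G u \<subseteq> {1,2,3}" using rng u by auto
    moreover have "card (col u ` incident_edges G u) = card {1,2,3::nat}"
      using card_image[OF inj[OF u]] deg[OF u] by simp
    ultimately have "col u ` incident_edges G u = {1,2,3}"
      by (intro card_subset_eq) auto
    then obtain e0 where e0: "e0 \<in> incident_edges G u" "col u e0 = a" using a by (metis imageE)
    have "{e\<in>incident_edges G u. col u e = a} = {e0}"
      using e0 inj[OF u] unfolding inj_on_def by auto
    then show ?thesis by simp
  qed
  have "card W = (\<Sum>u\<in>W. card {e\<in>incident_edges G u. col u e = a})"
    using one by simp
  also have "\<dots> = (\<Sum>u\<in>W. \<Sum>e\<in>edges G. if u \<in> ends G e \<and> col u e = a then 1 else 0)"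
  proof (intro sum.cong refl)
    fix u assume "u \<in> W"
    have "{e\<in>incident_edges G u. col u e = a} = {e\<in>edges G. u \<in> ends G e \<and> col u e = a}"
      by (auto simp: incident_edges_def)
    then show "card {e\<in>incident_edges G u. col u e = a} = (\<Sum>e\<in>edges G. if u \<in> ends G e \<and> col u e = a then 1 else 0)"
      using card_filter_sum[OF fin(1), of "\<lambda>e. u \<in> ends G e \<and> col u e = a"] by simp
  qed
  also have "\<dots> = (\<Sum>e\<in>edges G. \<Sum>u\<in>W. if u \<in> ends G e \<and> col u e = a then 1 else 0)"
    by (rule sum.swap)
  also have "\<dots> = (\<Sum>e\<in>edges G. card {u\<in>W. u \<in> ends G e \<and> col u e = a})"
    by (intro sum.cong refl) (simp add: card_filter_sum[OF fin(2)])
  finally show ?thesis by simp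
qed

lemma parity3:
  fixes p :: "nat \<Rightarrow> nat"
  assumes "p 1 \<in> {1,2,3}" "p 2 \<in> {1,2,3}" "p 3 \<in> {1,2,3}"
    and "\<forall>a\<in>{1,2,3::nat}. ((if p 1 = a then 1 else 0) + (if p 2 = a then 1 else 0) + (if p 3 = a then 1 else 0::nat)) mod 2 = N mod 2"
  shows "p 1 \<noteq> p 2 \<and> p 1 \<noteq> p 3 \<and> p 2 \<noteq> p 3"
proof -
  obtain r where r: "r = N mod 2" by blast
  have h: "\<And>a. a \<in> {1,2,3::nat} \<Longrightarrow> ((if p 1 = a then 1 else 0) + (if p 2 = a then 1 else 0) + (if p 3 = a then 1 else 0::nat)) mod 2 = r"
    using assms(4) r by blast
  have h1: "((if p 1 = 1 then 1 else 0) + (if p 2 = 1 then 1 else 0) + (if p 3 = 1 then 1 else 0::nat)) mod 2 = r" using h by simp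
  have h2: "((if p 1 = 2 then 1 else 0) + (if p 2 = 2 then 1 else 0) + (if p 3 = 2 then 1 else 0::nat)) mod 2 = r" using h by simp
  have h3: "((if p 1 = 3 then 1 else 0) + (if p 2 = 3 then 1 else 0) + (if p 3 = 3 then 1 else 0::nat)) mod 2 = r" using h by simp
  from assms(1) have "p 1 = 1 \<or> p 1 = 2 \<or> p 1 = 3" by simp
  moreover from assms(2) have "p 2 = 1 \<or> p 2 = 2 \<or> p 2 = 3" by simp
  moreover from assms(3) have "p 3 = 1 \<or> p 3 = 2 \<or> p 3 = 3" by simp
  ultimately show ?thesis using h1 h2 h3 by (elim disjE) simp_all
qed

lemma parity2:
  fixes p q :: nat
  assumes "p \<in> {1,2,3}" "q \<in> {1,2,3}"
    and "\<forall>a\<in>{1,2,3::nat}. ((if p = a then 1 else 0) + (if q = a then 1 else 0::nat)) mod 2 = N mod 2"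
  shows "p = q"
proof -
  obtain r where r: "r = N mod 2" by blast
  have h: "\<And>a. a \<in> {1,2,3::nat} \<Longrightarrow> ((if p = a then 1 else 0) + (if q = a then 1 else 0::nat)) mod 2 = r"
    using assms(3) r by blast
  have h1: "((if p = 1 then 1 else 0) + (if q = 1 then 1 else 0::nat)) mod 2 = r" using h by simp
  have h2: "((if p = 2 then 1 else 0) + (if q = 2 then 1 else 0::nat)) mod 2 = r" using h by simp
  have h3: "((if p = 3 then 1 else 0) + (if q = 3 then 1 else 0::nat)) mod 2 = r" using h by simp
  from assms(1) have "p = 1 \<or> p = 2 \<or> p = 3" by simp
  moreover from assms(2) have "q = 1 \<or> q = 2 \<or> q = 3" by simp
  ultimately show ?thesis using h1 h2 h3 by (elim disjE) simp_all
qed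



lemma ends_two:
  assumes "card (ends G e) = 2" "v \<in> ends G e" "u \<in> ends G e" "u \<noteq> v"
  shows "ends G e = {v, u}"
proof -
  have fin: "finite (ends G e)" using assms(1) card.infinite by fastforce
  have "{v,u} \<subseteq> ends G e" using assms by auto
  moreover have "card {v,u} = card (ends G e)" using assms by simp
  ultimately show ?thesis using card_subset_eq[OF fin] by blast
qed

lemma other_end_eq:
  assumes "card (ends G e) = 2" "v \<in> ends G e" "u \<in> ends G e" "u \<noteq> v"
  shows "other_end G e v = u"
proof -
  have E: "ends G e = {v, u}" by (rule ends_two[OF assms])
  show ?thesis unfolding other_end_def E
  proof (rule the_equality)
    fix w assume "{v, u} = {v, w}"
    then show "w = u" using assms(4) by (metis doubleton_eq_iff)
  qed simp
qed

lemma other_end_in: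
  assumes "card (ends G e) = 2" "v \<in> ends G e"
  shows "other_end G e v \<in> ends G e \<and> other_end G e v \<noteq> v"
proof -
  have "\<not> ends G e \<subseteq> {v}"
  proof
    assume "ends G e \<subseteq> {v}"
    then have "card (ends G e) \<le> card {v}" by (rule card_mono[rotated]) simp
    thus False using assms(1) by simp
  qed
  then obtain u where "u \<in> ends G e" "u \<noteq> v" by blast
  thus ?thesis using other_end_eq[OF assms \<open>u \<in> ends G e\<close> \<open>u \<noteq> v\<close>] by simp
qed

lemma allornone_Y:
  assumes "C' = swapU K a b C" "a \<noteq> b" "C g \<in> {a,b}" "C h \<in> {a,b}" "C g \<noteq> C h" "C' g \<noteq> C' h" "g \<in> K"
  shows "h \<in> K"
proof (rule ccontr)
  assume "h \<notin> K"
  hence "C' h = C h" "C' g = swap_col a b (C g)" using assms(1,7) by (simp_all add: swapU_def)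
  thus False using assms(2-6) by (auto simp: swap_col_def)
qed

lemma allornone_H:
  assumes "C' = swapU K a b C" "a \<noteq> b" "C g \<in> {a,b}" "C g = C h" "C' g = C' h" "g \<in> K"
  shows "h \<in> K"
proof (rule ccontr)
  assume "h \<notin> K"
  hence "C' h = C h" "C' g = swap_col a b (C g)" using assms(1,6) by (simp_all add: swapU_def)
  thus False using assms(2-5) by (auto simp: swap_col_def)
qed

lemma finish1:
  fixes \<Gamma> :: "('V,'E) mgraph" and G :: "('v,'e) mgraph" and \<pi> :: "'e \<Rightarrow> 'E"
  assumes "kempe_equiv \<Gamma> C1 C2" "proper_3col \<Gamma> C1" "finite (edges G)"
   and clos: "\<And>C C' a b e0 e f. proper_3col \<Gamma> C \<Longrightarrow> proper_3col \<Gamma> C' \<Longrightarrow> a\<in>{1,2,3} \<Longrightarrow> b\<in>{1,2,3} \<Longrightarrow>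
      a\<noteq>b \<Longrightarrow> e0 \<in> edges \<Gamma> \<Longrightarrow> C e0 \<in> {a,b} \<Longrightarrow> C' = swapU (kempe_chain \<Gamma> C a b e0) a b C \<Longrightarrow>
      e\<in>edges G \<Longrightarrow> f\<in>edges G \<Longrightarrow> ends G e \<inter> ends G f \<noteq> {} \<Longrightarrow>
      \<pi> e \<in> kempe_chain \<Gamma> C a b e0 \<Longrightarrow> C (\<pi> f) \<in> {a,b} \<Longrightarrow> \<pi> f \<in> kempe_chain \<Gamma> C a b e0"
   and img: "\<And>e. e \<in> edges G \<Longrightarrow> \<pi> e \<in> edges \<Gamma>"
   and "eqE G c1 (C1 \<circ> \<pi>)" "eqE G (C2 \<circ> \<pi>) c2"
  shows "kempe_equiv G c1 c2"
proof -
  obtain C3 where C3: "(kempe_step \<Gamma>)\<^sup>*\<^sup>* C1 C3" "\<forall>e\<in>edges \<Gamma>. C3 e = C2 e"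
    using assms(1) unfolding kempe_equiv_def by blast
  have k: "kempe_equiv G (C1 \<circ> \<pi>) (C3 \<circ> \<pi>)"
    using proj_rtrancl[OF C3(1) assms(2,3), of \<pi>] clos by blast
  have "eqE G (C3 \<circ> \<pi>) (C2 \<circ> \<pi>)" using C3(2) img by (simp add: eqE_def)
  hence "eqE G (C3 \<circ> \<pi>) c2" using assms(7) eqE_trans by blast
  show ?thesis
    by (rule kempe_equiv_trans[OF kempe_equiv_eqE[OF assms(6)] kempe_equiv_trans[OF k kempe_equiv_eqE]])
      (fact)
qed

lemma finish2:
  assumes "kempe_equiv G (\<sigma>1 \<circ> d1) (\<sigma>2 \<circ> d2)" "proper_3col G d1" "proper_3col G d2"
    "bij_betw \<sigma>1 {1,2,3} {1,2,3::nat}" "bij_betw \<sigma>2 {1,2,3} {1,2,3::nat}" "finite (edges G)"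
  shows "kempe_equiv G d1 d2"
proof -
  have r1: "\<forall>e\<in>edges G. d1 e \<in> {1,2,3}" using assms(2) by (simp add: proper_3col_def)
  have r2: "\<forall>e\<in>edges G. d2 e \<in> {1,2,3}" using assms(3) by (simp add: proper_3col_def)
  have k1: "kempe_equiv G d1 (\<sigma>1 \<circ> d1)" by (rule perm_equiv[OF assms(6,4) r1])
  define \<tau> where "\<tau> = the_inv_into {1,2,3} \<sigma>2"
  have t: "bij_betw \<tau> {1,2,3} {1,2,3::nat}" unfolding \<tau>_def by (rule bij_betw_the_inv_into[OF assms(5)])
  have r3: "\<forall>e\<in>edges G. (\<sigma>2 \<circ> d2) e \<in> {1,2,3}"
  proof
    fix e assume "e \<in> edges G"
    then have "d2 e \<in> {1,2,3}" using r2 by blast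
    then show "(\<sigma>2 \<circ> d2) e \<in> {1,2,3}" using bij_betwE[OF assms(5)] by (simp only: o_apply)
  qed
  have k2: "kempe_equiv G (\<sigma>2 \<circ> d2) (\<tau> \<circ> (\<sigma>2 \<circ> d2))" by (rule perm_equiv[OF assms(6) t r3])
  have e3: "eqE G (\<tau> \<circ> (\<sigma>2 \<circ> d2)) d2"
    using r2 the_inv_into_f_f[of \<sigma>2 "{1,2,3}"] assms(5) by (auto simp: eqE_def \<tau>_def bij_betw_def)
  show ?thesis
    by (rule kempe_equiv_trans[OF k1 kempe_equiv_trans[OF assms(1) kempe_equiv_trans[OF k2 kempe_equiv_eqE[OF e3]]]])
qed



locale Ycomp =
  fixes G1 :: "('v1, 'e1) mgraph" and v1 :: 'v1 and x :: "nat \<Rightarrow> 'e1"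
    and G2 :: "('v2, 'e2) mgraph" and v2 :: 'v2 and y :: "nat \<Rightarrow> 'e2"
  assumes cub1: "cubic G1" and cub2: "cubic G2"
    and vY1: "valid_Y_choice G1 v1 x" and vY2: "valid_Y_choice G2 v2 y"
begin

abbreviation "\<Gamma> \<equiv> compY G1 v1 x G2 v2 y"
abbreviation "I1 \<equiv> incident_edges G1 v1"
abbreviation "I2 \<equiv> incident_edges G2 v2"

definition \<pi>1 :: "'e1 \<Rightarrow> ('e1 + 'e2) + nat" where "\<pi>1 e = (if e \<in> I1 then Inr (the_inv_into {1,2,3} x e) else Inl (Inl e))"
definition \<pi>2 :: "'e2 \<Rightarrow> ('e1 + 'e2) + nat" where "\<pi>2 e = (if e \<in> I2 then Inr (the_inv_into {1,2,3} y e) else Inl (Inr e))"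

lemma fin1: "finite (edges G1)" using cub1 by (simp add: cubic_def multigraph_def)
lemma fin2: "finite (edges G2)" using cub2 by (simp add: cubic_def multigraph_def)
lemma card1: "e \<in> edges G1 \<Longrightarrow> card (ends G1 e) = 2" using cub1 by (simp add: cubic_def multigraph_def)
lemma card2: "e \<in> edges G2 \<Longrightarrow> card (ends G2 e) = 2" using cub2 by (simp add: cubic_def multigraph_def)
lemma sub1: "e \<in> edges G1 \<Longrightarrow> ends G1 e \<subseteq> verts G1" using cub1 by (simp add: cubic_def multigraph_def)
lemma sub2: "e \<in> edges G2 \<Longrightarrow> ends G2 e \<subseteq> verts G2" using cub2 by (simp add: cubic_def multigraph_def)
lemma finv1: "finite (verts G1)" using cub1 by (simp add: cubic_def multigraph_def)
lemma deg1: "u \<in> verts G1 \<Longrightarrow> card (incident_edges G1 u) = 3" using cub1 by (simp add: cubic_def)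

lemma bx: "bij_betw x {1,2,3} I1" using vY1 by (simp add: valid_Y_choice_def)
lemma by2: "bij_betw y {1,2,3} I2" using vY2 by (simp add: valid_Y_choice_def)
lemma x_inc: "j \<in> {1,2,3} \<Longrightarrow> x j \<in> I1" using bij_betwE[OF bx] by blast
lemma y_inc: "j \<in> {1,2,3} \<Longrightarrow> y j \<in> I2" using bij_betwE[OF by2] by blast
lemma x_inj: "inj_on x {1,2,3}" using bx by (simp add: bij_betw_def)
lemma y_inj: "inj_on y {1,2,3}" using by2 by (simp add: bij_betw_def)
lemma inc_x: "e \<in> I1 \<Longrightarrow> \<exists>j\<in>{1,2,3}. e = x j" using bx by (auto simp: bij_betw_def)
lemma inc_y: "e \<in> I2 \<Longrightarrow> \<exists>j\<in>{1,2,3}. e = y j" using by2 by (auto simp: bij_betw_def)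

lemma I1_edges: "e \<in> I1 \<Longrightarrow> e \<in> edges G1 \<and> v1 \<in> ends G1 e" by (simp add: incident_edges_def)
lemma I2_edges: "e \<in> I2 \<Longrightarrow> e \<in> edges G2 \<and> v2 \<in> ends G2 e" by (simp add: incident_edges_def)
lemma notI1: "e \<in> edges G1 \<Longrightarrow> e \<notin> I1 \<Longrightarrow> v1 \<notin> ends G1 e" by (simp add: incident_edges_def)
lemma notI2: "e \<in> edges G2 \<Longrightarrow> e \<notin> I2 \<Longrightarrow> v2 \<notin> ends G2 e" by (simp add: incident_edges_def)

lemma mem11: "Inl (Inl e) \<in> edges \<Gamma> \<longleftrightarrow> e \<in> edges G1 \<and> e \<notin> I1" by (auto simp: compY_def)
lemma mem12: "Inl (Inr e) \<in> edges \<Gamma> \<longleftrightarrow> e \<in> edges G2 \<and> e \<notin> I2" by (auto simp: compY_def)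
lemma mem3: "Inr j \<in> edges \<Gamma> \<longleftrightarrow> j \<in> {1,2,3}" by (auto simp: compY_def)
lemma ends11: "ends \<Gamma> (Inl (Inl e)) = Inl ` ends G1 e" by (simp add: compY_def)
lemma ends12: "ends \<Gamma> (Inl (Inr e)) = Inr ` ends G2 e" by (simp add: compY_def)
lemma ends3: "ends \<Gamma> (Inr j) = {Inl (other_end G1 (x j) v1), Inr (other_end G2 (y j) v2)}" by (simp add: compY_def)

lemma \<pi>1_x: "j \<in> {1,2,3} \<Longrightarrow> \<pi>1 (x j) = Inr j"
  using x_inc the_inv_into_f_f[OF x_inj] by (simp add: \<pi>1_def)
lemma \<pi>2_y: "j \<in> {1,2,3} \<Longrightarrow> \<pi>2 (y j) = Inr j"
  using y_inc the_inv_into_f_f[OF y_inj] by (simp add: \<pi>2_def)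
lemma \<pi>1_n: "e \<notin> I1 \<Longrightarrow> \<pi>1 e = Inl (Inl e)" by (simp add: \<pi>1_def)
lemma \<pi>2_n: "e \<notin> I2 \<Longrightarrow> \<pi>2 e = Inl (Inr e)" by (simp add: \<pi>2_def)

lemma \<pi>1_edge: "e \<in> edges G1 \<Longrightarrow> \<pi>1 e \<in> edges \<Gamma>"
proof (cases "e \<in> I1")
  case True then obtain j where j: "j\<in>{1,2,3}" "e = x j" using inc_x by blast
  then show ?thesis using \<pi>1_x[OF j(1)] mem3[of j] by simp
qed (simp add: \<pi>1_n mem11)

lemma \<pi>2_edge: "e \<in> edges G2 \<Longrightarrow> \<pi>2 e \<in> edges \<Gamma>"
proof (cases "e \<in> I2")
  case True then obtain j where j: "j\<in>{1,2,3}" "e = y j" using inc_y by blast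
  then show ?thesis using \<pi>2_y[OF j(1)] mem3[of j] by simp
qed (simp add: \<pi>2_n mem12)

lemma \<pi>1_real: "e \<in> edges G1 \<Longrightarrow> u \<in> ends G1 e \<Longrightarrow> u \<noteq> v1 \<Longrightarrow> Inl u \<in> ends \<Gamma> (\<pi>1 e)"
proof (cases "e \<in> I1")
  case True
  assume a: "e \<in> edges G1" "u \<in> ends G1 e" "u \<noteq> v1"
  obtain j where j: "j\<in>{1,2,3}" "e = x j" using inc_x True by blast
  have "other_end G1 e v1 = u" using other_end_eq[OF card1[OF a(1)] _ a(2,3)] I1_edges[OF True] by blast
  then show ?thesis using j \<pi>1_x[OF j(1)] ends3[of j] by simp
qed (simp add: \<pi>1_n ends11)

lemma \<pi>2_real: "e \<in> edges G2 \<Longrightarrow> u \<in> ends G2 e \<Longrightarrow> u \<noteq> v2 \<Longrightarrow> Inr u \<in> ends \<Gamma> (\<pi>2 e)"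
proof (cases "e \<in> I2")
  case True
  assume a: "e \<in> edges G2" "u \<in> ends G2 e" "u \<noteq> v2"
  obtain j where j: "j\<in>{1,2,3}" "e = y j" using inc_y True by blast
  have "other_end G2 e v2 = u" using other_end_eq[OF card2[OF a(1)] _ a(2,3)] I2_edges[OF True] by blast
  then show ?thesis using j \<pi>2_y[OF j(1)] ends3[of j] by simp
qed (simp add: \<pi>2_n ends12)

lemma \<pi>1_cases: "(e \<in> I1 \<and> (\<exists>j\<in>{1,2,3}. e = x j \<and> \<pi>1 e = Inr j)) \<or> (e \<notin> I1 \<and> \<pi>1 e = Inl (Inl e))"
proof (cases "e \<in> I1")
  case True
  then obtain j where j: "j\<in>{1,2,3}" "e = x j" using inc_x by blast
  then have "\<pi>1 e = Inr j" using \<pi>1_x[OF j(1)] by simp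
  then show ?thesis using j True by blast
qed (simp add: \<pi>1_n)

lemma \<pi>1_inj: "inj_on \<pi>1 (edges G1)"
proof (rule inj_onI)
  fix e f assume "e \<in> edges G1" "f \<in> edges G1" "\<pi>1 e = \<pi>1 f"
  define \<rho> :: "('e1 + 'e2) + nat \<Rightarrow> _" where "\<rho> = (\<lambda>E. case E of Inl (Inl e') \<Rightarrow> e' | Inr j \<Rightarrow> x j | _ \<Rightarrow> undefined)"
  have "\<rho> (\<pi>1 g) = g" for g
    using \<pi>1_cases[of g] unfolding \<rho>_def by (elim disjE conjE bexE) auto
  then show "e = f" using \<open>\<pi>1 e = \<pi>1 f\<close> by metis
qed

lemma \<pi>2_cases: "(e \<in> I2 \<and> (\<exists>j\<in>{1,2,3}. e = y j \<and> \<pi>2 e = Inr j)) \<or> (e \<notin> I2 \<and> \<pi>2 e = Inl (Inr e))"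
proof (cases "e \<in> I2")
  case True
  then obtain j where j: "j\<in>{1,2,3}" "e = y j" using inc_y by blast
  then have "\<pi>2 e = Inr j" using \<pi>2_y[OF j(1)] by simp
  then show ?thesis using j True by blast
qed (simp add: \<pi>2_n)

lemma \<pi>2_inj: "inj_on \<pi>2 (edges G2)"
proof (rule inj_onI)
  fix e f assume "e \<in> edges G2" "f \<in> edges G2" "\<pi>2 e = \<pi>2 f"
  define \<rho> :: "('e1 + 'e2) + nat \<Rightarrow> _" where "\<rho> = (\<lambda>E. case E of Inl (Inr e') \<Rightarrow> e' | Inr j \<Rightarrow> y j | _ \<Rightarrow> undefined)"
  have "\<rho> (\<pi>2 g) = g" for g
    using \<pi>2_cases[of g] unfolding \<rho>_def by (elim disjE conjE bexE) auto
  then show "e = f" using \<open>\<pi>2 e = \<pi>2 f\<close> by metis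
qed

lemma conv_l: "E \<in> edges \<Gamma> \<Longrightarrow> Inl u \<in> ends \<Gamma> E \<Longrightarrow> \<exists>e\<in>edges G1. E = \<pi>1 e \<and> u \<in> ends G1 e \<and> u \<noteq> v1"
proof (cases E)
  case (Inl E')
  assume a: "E \<in> edges \<Gamma>" "Inl u \<in> ends \<Gamma> E"
  show ?thesis
  proof (cases E')
    case (Inl e)
    then have "e \<in> edges G1" "e \<notin> I1" "u \<in> ends G1 e" using a \<open>E = Inl E'\<close> mem11 ends11 by auto
    then show ?thesis using \<open>E = Inl E'\<close> Inl \<pi>1_n notI1 by metis
  next
    case (Inr f)
    then show ?thesis using a \<open>E = Inl E'\<close> ends12 by auto
  qed
next
  case (Inr j)
  assume a: "E \<in> edges \<Gamma>" "Inl u \<in> ends \<Gamma> E"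
  then have j: "j \<in> {1,2,3}" using mem3 Inr by simp
  have u: "u = other_end G1 (x j) v1" using a Inr ends3 by simp
  have xe: "x j \<in> edges G1" "v1 \<in> ends G1 (x j)" using I1_edges[OF x_inc[OF j]] by auto
  have "u \<in> ends G1 (x j) \<and> u \<noteq> v1" using other_end_in[OF card1[OF xe(1)] xe(2)] u by simp
  then show ?thesis using xe Inr \<pi>1_x[OF j] by metis
qed

lemma conv_r: "E \<in> edges \<Gamma> \<Longrightarrow> Inr u \<in> ends \<Gamma> E \<Longrightarrow> \<exists>e\<in>edges G2. E = \<pi>2 e \<and> u \<in> ends G2 e \<and> u \<noteq> v2"
proof (cases E)
  case (Inl E')
  assume a: "E \<in> edges \<Gamma>" "Inr u \<in> ends \<Gamma> E"
  show ?thesis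
  proof (cases E')
    case (Inr e)
    then have "e \<in> edges G2" "e \<notin> I2" "u \<in> ends G2 e" using a \<open>E = Inl E'\<close> mem12 ends12 by auto
    then show ?thesis using \<open>E = Inl E'\<close> Inr \<pi>2_n notI2 by metis
  next
    case (Inl f)
    then show ?thesis using a \<open>E = Inl E'\<close> ends11 by auto
  qed
next
  case (Inr j)
  assume a: "E \<in> edges \<Gamma>" "Inr u \<in> ends \<Gamma> E"
  then have j: "j \<in> {1,2,3}" using mem3 Inr by simp
  have u: "u = other_end G2 (y j) v2" using a Inr ends3 by simp
  have xe: "y j \<in> edges G2" "v2 \<in> ends G2 (y j)" using I2_edges[OF y_inc[OF j]] by auto
  have "u \<in> ends G2 (y j) \<and> u \<noteq> v2" using other_end_in[OF card2[OF xe(1)] xe(2)] u by simp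
  then show ?thesis using xe Inr \<pi>2_y[OF j] by metis
qed

end


context Ycomp begin

lemma \<Gamma>_cover: "E \<in> edges \<Gamma> \<Longrightarrow> (\<exists>e\<in>edges G1. E = \<pi>1 e) \<or> (\<exists>f\<in>edges G2. E = \<pi>2 f)"
proof (cases E)
  case (Inl E')
  assume a: "E \<in> edges \<Gamma>"
  show ?thesis
  proof (cases E')
    case (Inl e)
    then have "e \<in> edges G1" "e \<notin> I1" using a \<open>E = Inl E'\<close> mem11 by auto
    then show ?thesis using \<open>E = Inl E'\<close> Inl \<pi>1_n by metis
  next
    case (Inr e)
    then have "e \<in> edges G2" "e \<notin> I2" using a \<open>E = Inl E'\<close> mem12 by auto
    then show ?thesis using \<open>E = Inl E'\<close> Inr \<pi>2_n by metis
  qed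
next
  case (Inr j)
  assume a: "E \<in> edges \<Gamma>"
  then have j: "j \<in> {1,2,3}" using mem3 Inr by simp
  then show ?thesis using I1_edges[OF x_inc[OF j]] \<pi>1_x[OF j] Inr by metis
qed

lemma colY_\<pi>1:
  assumes "e \<in> edges G1"
  shows "colY x c \<sigma> d (\<pi>1 e) = c e"
  using \<pi>1_cases[of e] by (elim disjE conjE bexE) (auto simp: colY_def)

lemma colY_\<pi>2:
  assumes "e \<in> edges G2" "\<forall>j\<in>{1,2,3}. \<sigma> (d (y j)) = c (x j)"
  shows "colY x c \<sigma> d (\<pi>2 e) = \<sigma> (d e)"
  using \<pi>2_cases[of e] assms(2) by (elim disjE conjE bexE) (auto simp: colY_def)

lemma proper_colY:
  assumes c: "proper_3col G1 c" and d: "proper_3col G2 d" and s: "bij_betw \<sigma> {1,2,3} {1,2,3::nat}"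
    and cond: "\<forall>j\<in>{1,2,3}. \<sigma> (d (y j)) = c (x j)"
  shows "proper_3col \<Gamma> (colY x c \<sigma> d)"
  unfolding proper_3col_def
proof (intro conjI ballI impI)
  fix E assume "E \<in> edges \<Gamma>"
  then show "colY x c \<sigma> d E \<in> {1,2,3}"
  proof (rule \<Gamma>_cover[THEN disjE])
    assume "\<exists>e\<in>edges G1. E = \<pi>1 e"
    then obtain e where "e \<in> edges G1" "E = \<pi>1 e" by blast
    then show ?thesis using colY_\<pi>1 c by (simp add: proper_3col_def)
  next
    assume "\<exists>e\<in>edges G2. E = \<pi>2 e"
    then obtain e where e: "e \<in> edges G2" "E = \<pi>2 e" by blast
    then have "d e \<in> {1,2,3}" using d by (simp add: proper_3col_def)
    then have "\<sigma> (d e) \<in> {1,2,3}" using bij_betwE[OF s] by blast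
    then show ?thesis using colY_\<pi>2[where \<sigma>=\<sigma> and d=d and c=c, OF e(1) cond] e(2) by simp
  qed
next
  fix E F assume EF: "E \<in> edges \<Gamma>" "F \<in> edges \<Gamma>" "E \<noteq> F \<and> ends \<Gamma> E \<inter> ends \<Gamma> F \<noteq> {}"
  then obtain w where w: "w \<in> ends \<Gamma> E" "w \<in> ends \<Gamma> F" by blast
  show "colY x c \<sigma> d E \<noteq> colY x c \<sigma> d F"
  proof (cases w)
    case (Inl u)
    obtain e where e: "e\<in>edges G1" "E = \<pi>1 e" "u \<in> ends G1 e" using conv_l[OF EF(1)] w Inl by blast
    obtain f where f: "f\<in>edges G1" "F = \<pi>1 f" "u \<in> ends G1 f" using conv_l[OF EF(2)] w Inl by blast
    have "e \<noteq> f" using e f EF by blast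
    then have "c e \<noteq> c f" using c e f unfolding proper_3col_def by blast
    then show ?thesis using e f colY_\<pi>1 by simp
  next
    case (Inr u)
    obtain e where e: "e\<in>edges G2" "E = \<pi>2 e" "u \<in> ends G2 e" using conv_r[OF EF(1)] w Inr by blast
    obtain f where f: "f\<in>edges G2" "F = \<pi>2 f" "u \<in> ends G2 f" using conv_r[OF EF(2)] w Inr by blast
    have "e \<noteq> f" using e f EF by blast
    then have ne: "d e \<noteq> d f" using d e f unfolding proper_3col_def by blast
    have "d e \<in> {1,2,3}" "d f \<in> {1,2,3}" using d e f by (simp_all add: proper_3col_def)
    then have "\<sigma> (d e) \<noteq> \<sigma> (d f)" using ne s unfolding bij_betw_def inj_on_def by blast
    then show ?thesis using e f colY_\<pi>2[where \<sigma>=\<sigma> and d=d and c=c, OF _ cond] by simp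
  qed
qed

lemma parityY_all:
  assumes C: "proper_3col \<Gamma> C"
  shows "C (Inr 1) \<noteq> C (Inr 2) \<and> C (Inr 1) \<noteq> C (Inr 3) \<and> C (Inr 2) \<noteq> C (Inr 3)"
proof -
  define W where "W = verts G1 - {v1}"
  have rngC: "\<And>e. e \<in> edges G1 \<Longrightarrow> C (\<pi>1 e) \<in> {1,2,3}" using C \<pi>1_edge by (simp add: proper_3col_def)
  have key: "card W mod 2 = ((if C (Inr 1) = a then 1 else 0) + (if C (Inr 2) = a then 1 else 0) + (if C (Inr 3) = a then 1 else 0::nat)) mod 2"
    if a: "a \<in> {1,2,3}" for a
  proof -
    define g where "g = (\<lambda>e. if C (\<pi>1 e) = a then 1 else 0::nat)"
    have hs: "(\<Sum>e\<in>edges G1. card {u\<in>W. u \<in> ends G1 e \<and> C (\<pi>1 e) = a}) = card W"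
    proof (rule handshake[OF fin1])
      show "finite W" using finv1 by (simp add: W_def)
      show "\<And>u. u \<in> W \<Longrightarrow> card (incident_edges G1 u) = 3" using deg1 by (simp add: W_def)
      show "\<And>u e. u \<in> W \<Longrightarrow> e \<in> incident_edges G1 u \<Longrightarrow> C (\<pi>1 e) \<in> {1,2,3}"
        using rngC by (simp add: incident_edges_def)
      show "inj_on (\<lambda>e. C (\<pi>1 e)) (incident_edges G1 u)" if u: "u \<in> W" for u
      proof (rule inj_onI, rule ccontr)
        fix e f assume ef: "e \<in> incident_edges G1 u" "f \<in> incident_edges G1 u" "C (\<pi>1 e) = C (\<pi>1 f)" "e \<noteq> f"
        have e: "e \<in> edges G1" "u \<in> ends G1 e" and f: "f \<in> edges G1" "u \<in> ends G1 f"
          using ef by (simp_all add: incident_edges_def)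
        have uv: "u \<noteq> v1" using u by (simp add: W_def)
        have "\<pi>1 e \<noteq> \<pi>1 f" using \<pi>1_inj e f ef(4) unfolding inj_on_def by blast
        moreover have "Inl u \<in> ends \<Gamma> (\<pi>1 e) \<inter> ends \<Gamma> (\<pi>1 f)" using \<pi>1_real e f uv by blast
        ultimately have "C (\<pi>1 e) \<noteq> C (\<pi>1 f)" using C \<pi>1_edge[OF e(1)] \<pi>1_edge[OF f(1)]
          unfolding proper_3col_def by blast
        then show False using ef(3) by simp
      qed
    qed (rule a)
    have tm: "card {u\<in>W. u \<in> ends G1 e \<and> C (\<pi>1 e) = a} = (if e \<in> I1 then g e else 2 * g e)"
      if e: "e \<in> edges G1" for e
    proof (cases "C (\<pi>1 e) = a")
      case True
      have "{u\<in>W. u \<in> ends G1 e \<and> C (\<pi>1 e) = a} = ends G1 e - {v1}"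
        using True sub1[OF e] by (auto simp: W_def)
      moreover have "card (ends G1 e - {v1}) = (if e \<in> I1 then 1 else 2)"
        using card1[OF e] e by (simp add: card_Diff_singleton_if incident_edges_def)
      ultimately show ?thesis using True by (simp add: g_def)
    qed (simp add: g_def)
    have "card W = (\<Sum>e\<in>edges G1. if e \<in> I1 then g e else 2 * g e)"
      using hs tm by simp
    also have "\<dots> = (\<Sum>e\<in>edges G1 \<inter> {e. e \<in> I1}. g e) + (\<Sum>e\<in>edges G1 \<inter> - {e. e \<in> I1}. 2 * g e)"
      by (rule sum.If_cases[OF fin1])
    also have "edges G1 \<inter> {e. e \<in> I1} = I1" by (auto simp: incident_edges_def)
    also have "(\<Sum>e\<in>edges G1 \<inter> - {e. e \<in> I1}. 2 * g e) = 2 * (\<Sum>e\<in>edges G1 \<inter> - {e. e \<in> I1}. g e)"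
      by (simp add: sum_distrib_left)
    also have "(\<Sum>e\<in>I1. g e) = (\<Sum>j\<in>{1,2,3}. g (x j))"
      by (rule sum.reindex_bij_betw[OF bx, symmetric])
    also have "\<dots> = (\<Sum>j\<in>{1,2,3}. if C (Inr j) = a then 1 else 0)"
      by (intro sum.cong refl) (simp add: g_def \<pi>1_x)
    also have "\<dots> = (if C (Inr 1) = a then 1 else 0) + (if C (Inr 2) = a then 1 else 0) + (if C (Inr 3) = a then 1 else 0::nat)"
      by simp
    finally show ?thesis by simp
  qed
  have r: "C (Inr 1) \<in> {1,2,3}" "C (Inr 2) \<in> {1,2,3}" "C (Inr 3) \<in> {1,2,3}"
    using C mem3 by (simp_all add: proper_3col_def)
  show ?thesis
    using parity3[of "\<lambda>j. C (Inr j)" "card W"] r key by simp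
qed

lemma parityY:
  assumes "proper_3col \<Gamma> C" "i \<in> {1,2,3}" "j \<in> {1,2,3}" "i \<noteq> j"
  shows "C (Inr i) \<noteq> C (Inr j)"
  using parityY_all[OF assms(1)] assms(2-4) by auto

end


context Ycomp begin

lemma closY1:
  assumes C: "proper_3col \<Gamma> C" and C': "proper_3col \<Gamma> C'" and ab: "a\<in>{1,2,3}" "b\<in>{1,2,3}" "a\<noteq>b"
    and e0: "e0 \<in> edges \<Gamma>" "C e0 \<in> {a,b}" and sw: "C' = swapU (kempe_chain \<Gamma> C a b e0) a b C"
    and ef: "e\<in>edges G1" "f\<in>edges G1" "ends G1 e \<inter> ends G1 f \<noteq> {}"
    and inK: "\<pi>1 e \<in> kempe_chain \<Gamma> C a b e0" and cf: "C (\<pi>1 f) \<in> {a,b}"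
  shows "\<pi>1 f \<in> kempe_chain \<Gamma> C a b e0"
proof -
  obtain u where u: "u \<in> ends G1 e" "u \<in> ends G1 f" using ef(3) by blast
  have ce: "C (\<pi>1 e) \<in> {a,b}" using chain_props[OF e0 inK] by blast
  show ?thesis
  proof (cases "u = v1")
    case False
    have "kempe_adj \<Gamma> C a b (\<pi>1 e) (\<pi>1 f)"
      unfolding kempe_adj_def using \<pi>1_edge ef \<pi>1_real u False ce cf by blast
    then show ?thesis by (rule chain_closed[OF inK])
  next
    case True
    have "e \<in> I1" "f \<in> I1" using u ef True by (simp_all add: incident_edges_def)
    then obtain i j where i: "i \<in> {1,2,3}" "e = x i" and j: "j \<in> {1,2,3}" "f = x j"
      using inc_x by meson
    have pe: "\<pi>1 e = Inr i" using \<pi>1_x[OF i(1)] i(2) by simp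
    have pf: "\<pi>1 f = Inr j" using \<pi>1_x[OF j(1)] j(2) by simp
    show ?thesis
    proof (cases "i = j")
      case True then show ?thesis using inK pe pf by simp
    next
      case False
      have "Inr j \<in> kempe_chain \<Gamma> C a b e0"
      proof (rule allornone_Y[OF sw ab(3)])
        show "C (Inr i) \<in> {a,b}" using ce pe by simp
        show "C (Inr j) \<in> {a,b}" using cf pf by simp
        show "C (Inr i) \<noteq> C (Inr j)" by (rule parityY[OF C i(1) j(1) False])
        show "C' (Inr i) \<noteq> C' (Inr j)" by (rule parityY[OF C' i(1) j(1) False])
        show "Inr i \<in> kempe_chain \<Gamma> C a b e0" using inK pe by simp
      qed
      then show ?thesis using pf by simp
    qed
  qed
qed

lemma closY2:
  assumes C: "proper_3col \<Gamma> C" and C': "proper_3col \<Gamma> C'" and ab: "a\<in>{1,2,3}" "b\<in>{1,2,3}" "a\<noteq>b"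
    and e0: "e0 \<in> edges \<Gamma>" "C e0 \<in> {a,b}" and sw: "C' = swapU (kempe_chain \<Gamma> C a b e0) a b C"
    and ef: "e\<in>edges G2" "f\<in>edges G2" "ends G2 e \<inter> ends G2 f \<noteq> {}"
    and inK: "\<pi>2 e \<in> kempe_chain \<Gamma> C a b e0" and cf: "C (\<pi>2 f) \<in> {a,b}"
  shows "\<pi>2 f \<in> kempe_chain \<Gamma> C a b e0"
proof -
  obtain u where u: "u \<in> ends G2 e" "u \<in> ends G2 f" using ef(3) by blast
  have ce: "C (\<pi>2 e) \<in> {a,b}" using chain_props[OF e0 inK] by blast
  show ?thesis
  proof (cases "u = v2")
    case False
    have "kempe_adj \<Gamma> C a b (\<pi>2 e) (\<pi>2 f)"
      unfolding kempe_adj_def using \<pi>2_edge ef \<pi>2_real u False ce cf by blast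
    then show ?thesis by (rule chain_closed[OF inK])
  next
    case True
    have "e \<in> I2" "f \<in> I2" using u ef True by (simp_all add: incident_edges_def)
    then obtain i j where i: "i \<in> {1,2,3}" "e = y i" and j: "j \<in> {1,2,3}" "f = y j"
      using inc_y by meson
    have pe: "\<pi>2 e = Inr i" using \<pi>2_y[OF i(1)] i(2) by simp
    have pf: "\<pi>2 f = Inr j" using \<pi>2_y[OF j(1)] j(2) by simp
    show ?thesis
    proof (cases "i = j")
      case True then show ?thesis using inK pe pf by simp
    next
      case False
      have "Inr j \<in> kempe_chain \<Gamma> C a b e0"
      proof (rule allornone_Y[OF sw ab(3)])
        show "C (Inr i) \<in> {a,b}" using ce pe by simp
        show "C (Inr j) \<in> {a,b}" using cf pf by simp
        show "C (Inr i) \<noteq> C (Inr j)" by (rule parityY[OF C i(1) j(1) False])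
        show "C' (Inr i) \<noteq> C' (Inr j)" by (rule parityY[OF C' i(1) j(1) False])
        show "Inr i \<in> kempe_chain \<Gamma> C a b e0" using inK pe by simp
      qed
      then show ?thesis using pf by simp
    qed
  qed
qed

lemma Y_main:
  assumes c1: "proper_3col G1 c1" and c2: "proper_3col G1 c2"
    and d1: "proper_3col G2 d1" and d2: "proper_3col G2 d2"
    and s1: "bij_betw \<sigma>1 {1,2,3} {1,2,3::nat}" and h1: "\<forall>j\<in>{1,2,3}. \<sigma>1 (d1 (y j)) = c1 (x j)"
    and s2: "bij_betw \<sigma>2 {1,2,3} {1,2,3::nat}" and h2: "\<forall>j\<in>{1,2,3}. \<sigma>2 (d2 (y j)) = c2 (x j)"
    and k: "kempe_equiv \<Gamma> (colY x c1 \<sigma>1 d1) (colY x c2 \<sigma>2 d2)"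
  shows "kempe_equiv G1 c1 c2 \<and> kempe_equiv G2 d1 d2"
proof
  have P: "proper_3col \<Gamma> (colY x c1 \<sigma>1 d1)" by (rule proper_colY[OF c1 d1 s1 h1])
  show "kempe_equiv G1 c1 c2"
  proof (rule finish1[OF k P fin1, where \<pi> = \<pi>1])
    show "\<And>e. e \<in> edges G1 \<Longrightarrow> \<pi>1 e \<in> edges \<Gamma>" by (rule \<pi>1_edge)
    show "eqE G1 c1 (colY x c1 \<sigma>1 d1 \<circ> \<pi>1)" by (simp add: eqE_def colY_\<pi>1)
    show "eqE G1 (colY x c2 \<sigma>2 d2 \<circ> \<pi>1) c2" by (simp add: eqE_def colY_\<pi>1)
  qed (rule closY1; assumption)
  have "kempe_equiv G2 (\<sigma>1 \<circ> d1) (\<sigma>2 \<circ> d2)"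
  proof (rule finish1[OF k P fin2, where \<pi> = \<pi>2])
    show "\<And>e. e \<in> edges G2 \<Longrightarrow> \<pi>2 e \<in> edges \<Gamma>" by (rule \<pi>2_edge)
    show "eqE G2 (\<sigma>1 \<circ> d1) (colY x c1 \<sigma>1 d1 \<circ> \<pi>2)" using colY_\<pi>2[where \<sigma>=\<sigma>1 and d=d1 and c=c1, OF _ h1] by (simp add: eqE_def)
    show "eqE G2 (colY x c2 \<sigma>2 d2 \<circ> \<pi>2) (\<sigma>2 \<circ> d2)" using colY_\<pi>2[where \<sigma>=\<sigma>2 and d=d2 and c=c2, OF _ h2] by (simp add: eqE_def)
  qed (rule closY2; assumption)
  then show "kempe_equiv G2 d1 d2" by (rule finish2[OF _ d1 d2 s1 s2 fin2])
qed

end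


locale Hcomp =
  fixes G1 :: "('v1, 'e1) mgraph" and x :: 'e1 and s11 s12 :: 'v1
    and G2 :: "('v2, 'e2) mgraph" and y :: 'e2 and s21 s22 :: 'v2
  assumes cub1: "cubic G1" and cub2: "cubic G2"
    and vH1: "valid_H_choice G1 x s11 s12" and vH2: "valid_H_choice G2 y s21 s22"
begin

abbreviation "\<Gamma> \<equiv> compH G1 x s11 s12 G2 y s21 s22"

definition \<pi>1 :: "'e1 \<Rightarrow> ('e1 + 'e2) + nat" where "\<pi>1 e = (if e = x then Inr 1 else Inl (Inl e))"
definition \<pi>2 :: "'e2 \<Rightarrow> ('e1 + 'e2) + nat" where "\<pi>2 e = (if e = y then Inr 1 else Inl (Inr e))"
definition img1 :: "'v1 \<Rightarrow> 'e1 \<Rightarrow> ('e1 + 'e2) + nat" where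
  "img1 u e = (if e = x then (if u = s11 then Inr 1 else Inr 2) else Inl (Inl e))"
definition img2 :: "'v2 \<Rightarrow> 'e2 \<Rightarrow> ('e1 + 'e2) + nat" where
  "img2 u e = (if e = y then (if u = s21 then Inr 1 else Inr 2) else Inl (Inr e))"

lemma fin1: "finite (edges G1)" using cub1 by (simp add: cubic_def multigraph_def)
lemma fin2: "finite (edges G2)" using cub2 by (simp add: cubic_def multigraph_def)
lemma card1: "e \<in> edges G1 \<Longrightarrow> card (ends G1 e) = 2" using cub1 by (simp add: cubic_def multigraph_def)
lemma card2: "e \<in> edges G2 \<Longrightarrow> card (ends G2 e) = 2" using cub2 by (simp add: cubic_def multigraph_def)
lemma sub1: "e \<in> edges G1 \<Longrightarrow> ends G1 e \<subseteq> verts G1" using cub1 by (simp add: cubic_def multigraph_def)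
lemma finv1: "finite (verts G1)" using cub1 by (simp add: cubic_def multigraph_def)
lemma deg1: "u \<in> verts G1 \<Longrightarrow> card (incident_edges G1 u) = 3" using cub1 by (simp add: cubic_def)

lemma x_e: "x \<in> edges G1" and x_ends: "ends G1 x = {s11, s12}" using vH1 by (simp_all add: valid_H_choice_def)
lemma y_e: "y \<in> edges G2" and y_ends: "ends G2 y = {s21, s22}" using vH2 by (simp_all add: valid_H_choice_def)
lemma s1ne: "s11 \<noteq> s12" using card1[OF x_e] x_ends by auto
lemma s2ne: "s21 \<noteq> s22" using card2[OF y_e] y_ends by auto

lemma mem11: "Inl (Inl e) \<in> edges \<Gamma> \<longleftrightarrow> e \<in> edges G1 \<and> e \<noteq> x" by (auto simp: compH_def)
lemma mem12: "Inl (Inr e) \<in> edges \<Gamma> \<longleftrightarrow> e \<in> edges G2 \<and> e \<noteq> y" by (auto simp: compH_def)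
lemma mem3: "Inr j \<in> edges \<Gamma> \<longleftrightarrow> j \<in> {1,2}" by (auto simp: compH_def)
lemma ends11: "ends \<Gamma> (Inl (Inl e)) = Inl ` ends G1 e" by (simp add: compH_def)
lemma ends12: "ends \<Gamma> (Inl (Inr e)) = Inr ` ends G2 e" by (simp add: compH_def)
lemma ends31: "ends \<Gamma> (Inr 1) = {Inl s11, Inr s21}" by (simp add: compH_def)
lemma ends32: "ends \<Gamma> (Inr 2) = {Inl s12, Inr s22}" by (simp add: compH_def)
lemma ends3: "ends \<Gamma> (Inr j) = (if j = 1 then {Inl s11, Inr s21} else {Inl s12, Inr s22})" by (simp add: compH_def)

lemma \<pi>1_edge: "e \<in> edges G1 \<Longrightarrow> \<pi>1 e \<in> edges \<Gamma>" by (simp add: \<pi>1_def mem11 mem3)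
lemma \<pi>2_edge: "e \<in> edges G2 \<Longrightarrow> \<pi>2 e \<in> edges \<Gamma>" by (simp add: \<pi>2_def mem12 mem3)
lemma img1_edge: "e \<in> edges G1 \<Longrightarrow> img1 u e \<in> edges \<Gamma>" by (simp add: img1_def mem11 mem3)
lemma img2_edge: "e \<in> edges G2 \<Longrightarrow> img2 u e \<in> edges \<Gamma>" by (simp add: img2_def mem12 mem3)

lemma img1_real: "e \<in> edges G1 \<Longrightarrow> u \<in> ends G1 e \<Longrightarrow> Inl u \<in> ends \<Gamma> (img1 u e)"
  using x_ends by (auto simp: img1_def ends11 ends3)
lemma img2_real: "e \<in> edges G2 \<Longrightarrow> u \<in> ends G2 e \<Longrightarrow> Inr u \<in> ends \<Gamma> (img2 u e)"
  using y_ends by (auto simp: img2_def ends12 ends3)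

lemma img1_inj: "img1 u e = img1 u f \<Longrightarrow> e = f"
  by (auto simp: img1_def split: if_splits)
lemma img2_inj: "img2 u e = img2 u f \<Longrightarrow> e = f"
  by (auto simp: img2_def split: if_splits)

lemma conv_l:
  assumes "E \<in> edges \<Gamma>" "Inl u \<in> ends \<Gamma> E"
  shows "\<exists>e\<in>edges G1. u \<in> ends G1 e \<and> E = img1 u e"
proof (cases E)
  case (Inl E')
  show ?thesis
  proof (cases E')
    case (Inl e)
    then have "e \<in> edges G1" "e \<noteq> x" "u \<in> ends G1 e" using assms \<open>E = Inl E'\<close> mem11 ends11 by auto
    then show ?thesis using \<open>E = Inl E'\<close> Inl by (auto simp: img1_def)
  next
    case (Inr f)
    then show ?thesis using assms \<open>E = Inl E'\<close> ends12 by auto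
  qed
next
  case (Inr j)
  then have j: "j = 1 \<or> j = 2" using assms mem3 by simp
  then show ?thesis
  proof
    assume "j = 1"
    then have "u = s11" using assms Inr ends31 by simp
    then show ?thesis using x_e x_ends Inr \<open>j = 1\<close> by (auto simp: img1_def)
  next
    assume "j = 2"
    then have "u = s12" using assms Inr ends32 by simp
    then show ?thesis using x_e x_ends Inr \<open>j = 2\<close> s1ne by (auto simp: img1_def)
  qed
qed

lemma conv_r:
  assumes "E \<in> edges \<Gamma>" "Inr u \<in> ends \<Gamma> E"
  shows "\<exists>e\<in>edges G2. u \<in> ends G2 e \<and> E = img2 u e"
proof (cases E)
  case (Inl E')
  show ?thesis
  proof (cases E')
    case (Inr e)
    then have "e \<in> edges G2" "e \<noteq> y" "u \<in> ends G2 e" using assms \<open>E = Inl E'\<close> mem12 ends12 by auto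
    then show ?thesis using \<open>E = Inl E'\<close> Inr by (auto simp: img2_def)
  next
    case (Inl f)
    then show ?thesis using assms \<open>E = Inl E'\<close> ends11 by auto
  qed
next
  case (Inr j)
  then have j: "j = 1 \<or> j = 2" using assms mem3 by simp
  then show ?thesis
  proof
    assume "j = 1"
    then have "u = s21" using assms Inr ends31 by simp
    then show ?thesis using y_e y_ends Inr \<open>j = 1\<close> by (auto simp: img2_def)
  next
    assume "j = 2"
    then have "u = s22" using assms Inr ends32 by simp
    then show ?thesis using y_e y_ends Inr \<open>j = 2\<close> s2ne by (auto simp: img2_def)
  qed
qed

lemma colH_img1: "e \<in> edges G1 \<Longrightarrow> colH x c \<sigma> d (img1 u e) = c e"
  by (simp add: img1_def colH_def)
lemma colH_img2: "e \<in> edges G2 \<Longrightarrow> \<sigma> (d y) = c x \<Longrightarrow> colH x c \<sigma> d (img2 u e) = \<sigma> (d e)"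
  by (simp add: img2_def colH_def)
lemma colH_\<pi>1: "colH x c \<sigma> d (\<pi>1 e) = c e"
  by (simp add: \<pi>1_def colH_def)
lemma colH_\<pi>2: "\<sigma> (d y) = c x \<Longrightarrow> colH x c \<sigma> d (\<pi>2 e) = \<sigma> (d e)"
  by (simp add: \<pi>2_def colH_def)

lemma proper_colH:
  assumes c: "proper_3col G1 c" and d: "proper_3col G2 d" and s: "bij_betw \<sigma> {1,2,3} {1,2,3::nat}"
    and cond: "\<sigma> (d y) = c x"
  shows "proper_3col \<Gamma> (colH x c \<sigma> d)"
  unfolding proper_3col_def
proof (intro conjI ballI impI)
  fix E assume E: "E \<in> edges \<Gamma>"
  have cx: "c x \<in> {1,2,3}" using c x_e by (simp add: proper_3col_def)
  show "colH x c \<sigma> d E \<in> {1,2,3}"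
  proof (cases E)
    case (Inl E')
    show ?thesis
    proof (cases E')
      case (Inl e)
      then have "e \<in> edges G1" using E \<open>E = Inl E'\<close> mem11 by simp
      then show ?thesis using c Inl \<open>E = Inl E'\<close> by (simp add: proper_3col_def colH_def)
    next
      case (Inr e)
      then have "e \<in> edges G2" using E \<open>E = Inl E'\<close> mem12 by simp
      then have "d e \<in> {1,2,3}" using d by (simp add: proper_3col_def)
      then have "\<sigma> (d e) \<in> {1,2,3}" using bij_betwE[OF s] by blast
      then show ?thesis using Inr \<open>E = Inl E'\<close> by (simp add: colH_def)
    qed
  next
    case (Inr j)
    then show ?thesis using cx by (simp add: colH_def)
  qed
next
  fix E F assume EF: "E \<in> edges \<Gamma>" "F \<in> edges \<Gamma>" "E \<noteq> F \<and> ends \<Gamma> E \<inter> ends \<Gamma> F \<noteq> {}"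
  then obtain w where w: "w \<in> ends \<Gamma> E" "w \<in> ends \<Gamma> F" by blast
  show "colH x c \<sigma> d E \<noteq> colH x c \<sigma> d F"
  proof (cases w)
    case (Inl u)
    obtain e where e: "e\<in>edges G1" "u \<in> ends G1 e" "E = img1 u e" using conv_l[OF EF(1)] w Inl by blast
    obtain f where f: "f\<in>edges G1" "u \<in> ends G1 f" "F = img1 u f" using conv_l[OF EF(2)] w Inl by blast
    have "e \<noteq> f" using e f EF by blast
    then have "c e \<noteq> c f" using c e f unfolding proper_3col_def by blast
    then show ?thesis using e f colH_img1 by simp
  next
    case (Inr u)
    obtain e where e: "e\<in>edges G2" "u \<in> ends G2 e" "E = img2 u e" using conv_r[OF EF(1)] w Inr by blast
    obtain f where f: "f\<in>edges G2" "u \<in> ends G2 f" "F = img2 u f" using conv_r[OF EF(2)] w Inr by blast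
    have "e \<noteq> f" using e f EF by blast
    then have ne: "d e \<noteq> d f" using d e f unfolding proper_3col_def by blast
    have "d e \<in> {1,2,3}" "d f \<in> {1,2,3}" using d e f by (simp_all add: proper_3col_def)
    then have "\<sigma> (d e) \<noteq> \<sigma> (d f)" using ne s unfolding bij_betw_def inj_on_def by blast
    then show ?thesis using e f colH_img2[where \<sigma>=\<sigma> and d=d and c=c, OF _ cond] by simp
  qed
qed

lemma parityH:
  assumes C: "proper_3col \<Gamma> C"
  shows "C (Inr 1) = C (Inr 2)"
proof -
  define W where "W = verts G1"
  have rngC: "\<And>e u. e \<in> edges G1 \<Longrightarrow> C (img1 u e) \<in> {1,2,3}" using C img1_edge by (simp add: proper_3col_def)
  have key: "card W mod 2 = ((if C (Inr 1) = a then 1 else 0) + (if C (Inr 2) = a then 1 else 0::nat)) mod 2"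
    if a: "a \<in> {1,2,3}" for a
  proof -
    define g where "g = (\<lambda>e. if C (Inl (Inl e)) = a then 1 else 0::nat)"
    define T where "T = (if C (Inr 1) = a then 1 else 0) + (if C (Inr 2) = a then 1 else 0::nat)"
    have hs: "(\<Sum>e\<in>edges G1. card {u\<in>W. u \<in> ends G1 e \<and> C (img1 u e) = a}) = card W"
    proof (rule handshake[OF fin1])
      show "finite W" using finv1 by (simp add: W_def)
      show "\<And>u. u \<in> W \<Longrightarrow> card (incident_edges G1 u) = 3" using deg1 by (simp add: W_def)
      show "\<And>u e. u \<in> W \<Longrightarrow> e \<in> incident_edges G1 u \<Longrightarrow> C (img1 u e) \<in> {1,2,3}"
        using rngC by (simp add: incident_edges_def)
      show "inj_on (\<lambda>e. C (img1 u e)) (incident_edges G1 u)" if u: "u \<in> W" for u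
      proof (rule inj_onI, rule ccontr)
        fix e f assume ef: "e \<in> incident_edges G1 u" "f \<in> incident_edges G1 u" "C (img1 u e) = C (img1 u f)" "e \<noteq> f"
        have e: "e \<in> edges G1" "u \<in> ends G1 e" and f: "f \<in> edges G1" "u \<in> ends G1 f"
          using ef by (simp_all add: incident_edges_def)
        have "img1 u e \<noteq> img1 u f" using img1_inj ef(4) by blast
        moreover have "Inl u \<in> ends \<Gamma> (img1 u e) \<inter> ends \<Gamma> (img1 u f)" using img1_real e f by blast
        ultimately have "C (img1 u e) \<noteq> C (img1 u f)" using C img1_edge[OF e(1)] img1_edge[OF f(1)]
          unfolding proper_3col_def by blast
        then show False using ef(3) by simp
      qed
    qed (rule a)
    have tm: "card {u\<in>W. u \<in> ends G1 e \<and> C (img1 u e) = a} = (if e = x then T else 2 * g e)"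
      if e: "e \<in> edges G1" for e
    proof (cases "e = x")
      case True
      have "{u\<in>W. u \<in> ends G1 e \<and> C (img1 u e) = a} =
            (if C (Inr 1) = a then {s11} else {}) \<union> (if C (Inr 2) = a then {s12} else {})"
        using True x_ends sub1[OF x_e] s1ne by (auto simp: W_def img1_def)
      then show ?thesis using True s1ne by (simp add: T_def)
    next
      case False
      show ?thesis
      proof (cases "C (Inl (Inl e)) = a")
        case True
        have "{u\<in>W. u \<in> ends G1 e \<and> C (img1 u e) = a} = ends G1 e"
          using True False sub1[OF e] by (auto simp: W_def img1_def)
        then show ?thesis using True False card1[OF e] by (simp add: g_def)
      next
        case F: False
        have E0: "{u\<in>W. u \<in> ends G1 e \<and> C (img1 u e) = a} = {}"
          using F False by (auto simp: img1_def)
        show ?thesis by (subst E0) (simp add: g_def F False)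
      qed
    qed
    have "card W = (\<Sum>e\<in>edges G1. if e = x then T else 2 * g e)"
      using hs tm by simp
    also have "\<dots> = T + (\<Sum>e\<in>edges G1 - {x}. if e = x then T else 2 * g e)"
      using sum.remove[OF fin1 x_e, of "\<lambda>e. if e = x then T else 2 * g e"] by simp
    also have "(\<Sum>e\<in>edges G1 - {x}. if e = x then T else 2 * g e) = (\<Sum>e\<in>edges G1 - {x}. 2 * g e)"
      by (intro sum.cong refl) simp
    also have "\<dots> = 2 * (\<Sum>e\<in>edges G1 - {x}. g e)" by (simp add: sum_distrib_left)
    finally show ?thesis by (simp add: T_def)
  qed
  have r: "C (Inr 1) \<in> {1,2,3}" "C (Inr 2) \<in> {1,2,3}"
    using C mem3 by (simp_all add: proper_3col_def)
  show ?thesis using parity2[of "C (Inr 1)" "C (Inr 2)" "card W"] r key by simp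
qed

end


context Hcomp begin

lemma both12:
  assumes C: "proper_3col \<Gamma> C" and C': "proper_3col \<Gamma> C'" and ab: "a \<noteq> b"
    and e0: "e0 \<in> edges \<Gamma>" "C e0 \<in> {a,b}" and sw: "C' = swapU (kempe_chain \<Gamma> C a b e0) a b C"
  shows "Inr 1 \<in> kempe_chain \<Gamma> C a b e0 \<longleftrightarrow> Inr 2 \<in> kempe_chain \<Gamma> C a b e0"
proof
  assume h: "Inr 1 \<in> kempe_chain \<Gamma> C a b e0"
  have "C (Inr 1) \<in> {a,b}" using chain_props[OF e0 h] by blast
  then show "Inr 2 \<in> kempe_chain \<Gamma> C a b e0"
    by (rule allornone_H[OF sw ab _ parityH[OF C] parityH[OF C'] h])
next
  assume h: "Inr 2 \<in> kempe_chain \<Gamma> C a b e0"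
  have "C (Inr 2) \<in> {a,b}" using chain_props[OF e0 h] by blast
  then show "Inr 1 \<in> kempe_chain \<Gamma> C a b e0"
    by (rule allornone_H[OF sw ab _ parityH[OF C, symmetric] parityH[OF C', symmetric] h])
qed

lemma imgC1: "proper_3col \<Gamma> C \<Longrightarrow> C (img1 u e) = C (\<pi>1 e)"
  using parityH[of C] by (simp add: img1_def \<pi>1_def)
lemma imgC2: "proper_3col \<Gamma> C \<Longrightarrow> C (img2 u e) = C (\<pi>2 e)"
  using parityH[of C] by (simp add: img2_def \<pi>2_def)

lemma closH1:
  assumes C: "proper_3col \<Gamma> C" and C': "proper_3col \<Gamma> C'" and ab: "a\<in>{1,2,3}" "b\<in>{1,2,3}" "a\<noteq>b"
    and e0: "e0 \<in> edges \<Gamma>" "C e0 \<in> {a,b}" and sw: "C' = swapU (kempe_chain \<Gamma> C a b e0) a b C"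
    and ef: "e\<in>edges G1" "f\<in>edges G1" "ends G1 e \<inter> ends G1 f \<noteq> {}"
    and inK: "\<pi>1 e \<in> kempe_chain \<Gamma> C a b e0" and cf: "C (\<pi>1 f) \<in> {a,b}"
  shows "\<pi>1 f \<in> kempe_chain \<Gamma> C a b e0"
proof -
  note B = both12[OF C C' ab(3) e0 sw]
  have iK: "img1 u g \<in> kempe_chain \<Gamma> C a b e0 \<longleftrightarrow> \<pi>1 g \<in> kempe_chain \<Gamma> C a b e0" for u g
    using B by (simp add: img1_def \<pi>1_def)
  obtain u where u: "u \<in> ends G1 e" "u \<in> ends G1 f" using ef(3) by blast
  have ie: "img1 u e \<in> kempe_chain \<Gamma> C a b e0" using iK inK by blast
  have ce: "C (img1 u e) \<in> {a,b}" using chain_props[OF e0 ie] by blast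
  have cf': "C (img1 u f) \<in> {a,b}" using imgC1[OF C, of u f] cf by simp
  have w: "Inl u \<in> ends \<Gamma> (img1 u e)" "Inl u \<in> ends \<Gamma> (img1 u f)"
    using img1_real ef(1,2) u by blast+
  have "kempe_adj \<Gamma> C a b (img1 u e) (img1 u f)"
    unfolding kempe_adj_def using img1_edge[OF ef(1)] img1_edge[OF ef(2)] w ce cf' by blast
  then have "img1 u f \<in> kempe_chain \<Gamma> C a b e0" by (rule chain_closed[OF ie])
  then show ?thesis using iK by blast
qed

lemma closH2:
  assumes C: "proper_3col \<Gamma> C" and C': "proper_3col \<Gamma> C'" and ab: "a\<in>{1,2,3}" "b\<in>{1,2,3}" "a\<noteq>b"
    and e0: "e0 \<in> edges \<Gamma>" "C e0 \<in> {a,b}" and sw: "C' = swapU (kempe_chain \<Gamma> C a b e0) a b C"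
    and ef: "e\<in>edges G2" "f\<in>edges G2" "ends G2 e \<inter> ends G2 f \<noteq> {}"
    and inK: "\<pi>2 e \<in> kempe_chain \<Gamma> C a b e0" and cf: "C (\<pi>2 f) \<in> {a,b}"
  shows "\<pi>2 f \<in> kempe_chain \<Gamma> C a b e0"
proof -
  note B = both12[OF C C' ab(3) e0 sw]
  have iK: "img2 u g \<in> kempe_chain \<Gamma> C a b e0 \<longleftrightarrow> \<pi>2 g \<in> kempe_chain \<Gamma> C a b e0" for u g
    using B by (simp add: img2_def \<pi>2_def)
  obtain u where u: "u \<in> ends G2 e" "u \<in> ends G2 f" using ef(3) by blast
  have ie: "img2 u e \<in> kempe_chain \<Gamma> C a b e0" using iK inK by blast
  have ce: "C (img2 u e) \<in> {a,b}" using chain_props[OF e0 ie] by blast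
  have cf': "C (img2 u f) \<in> {a,b}" using imgC2[OF C, of u f] cf by simp
  have w: "Inr u \<in> ends \<Gamma> (img2 u e)" "Inr u \<in> ends \<Gamma> (img2 u f)"
    using img2_real ef(1,2) u by blast+
  have "kempe_adj \<Gamma> C a b (img2 u e) (img2 u f)"
    unfolding kempe_adj_def using img2_edge[OF ef(1)] img2_edge[OF ef(2)] w ce cf' by blast
  then have "img2 u f \<in> kempe_chain \<Gamma> C a b e0" by (rule chain_closed[OF ie])
  then show ?thesis using iK by blast
qed

lemma H_main:
  assumes c1: "proper_3col G1 c1" and c2: "proper_3col G1 c2"
    and d1: "proper_3col G2 d1" and d2: "proper_3col G2 d2"
    and s1: "bij_betw \<sigma>1 {1,2,3} {1,2,3::nat}" and h1: "\<sigma>1 (d1 y) = c1 x"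
    and s2: "bij_betw \<sigma>2 {1,2,3} {1,2,3::nat}" and h2: "\<sigma>2 (d2 y) = c2 x"
    and k: "kempe_equiv \<Gamma> (colH x c1 \<sigma>1 d1) (colH x c2 \<sigma>2 d2)"
  shows "kempe_equiv G1 c1 c2 \<and> kempe_equiv G2 d1 d2"
proof
  have P: "proper_3col \<Gamma> (colH x c1 \<sigma>1 d1)" by (rule proper_colH[OF c1 d1 s1 h1])
  show "kempe_equiv G1 c1 c2"
  proof (rule finish1[OF k P fin1, where \<pi> = \<pi>1])
    show "\<And>e. e \<in> edges G1 \<Longrightarrow> \<pi>1 e \<in> edges \<Gamma>" by (rule \<pi>1_edge)
    show "eqE G1 c1 (colH x c1 \<sigma>1 d1 \<circ> \<pi>1)" by (simp add: eqE_def colH_\<pi>1)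
    show "eqE G1 (colH x c2 \<sigma>2 d2 \<circ> \<pi>1) c2" by (simp add: eqE_def colH_\<pi>1)
  qed (rule closH1; assumption)
  have "kempe_equiv G2 (\<sigma>1 \<circ> d1) (\<sigma>2 \<circ> d2)"
  proof (rule finish1[OF k P fin2, where \<pi> = \<pi>2])
    show "\<And>e. e \<in> edges G2 \<Longrightarrow> \<pi>2 e \<in> edges \<Gamma>" by (rule \<pi>2_edge)
    show "eqE G2 (\<sigma>1 \<circ> d1) (colH x c1 \<sigma>1 d1 \<circ> \<pi>2)"
      using colH_\<pi>2[where \<sigma>=\<sigma>1 and d=d1 and c=c1, OF h1] by (simp add: eqE_def)
    show "eqE G2 (colH x c2 \<sigma>2 d2 \<circ> \<pi>2) (\<sigma>2 \<circ> d2)"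
      using colH_\<pi>2[where \<sigma>=\<sigma>2 and d=d2 and c=c2, OF h2] by (simp add: eqE_def)
  qed (rule closH2; assumption)
  then show "kempe_equiv G2 d1 d2" by (rule finish2[OF _ d1 d2 s1 s2 fin2])
qed

end

theorem lemma11:
  fixes G1 :: "('v1, 'e1) mgraph" and G2 :: "('v2, 'e2) mgraph"
  assumes "cubic G1" and "cubic G2"
    and "three_edge_colorable G1" and "three_edge_colorable G2"
  shows
   "(\<forall>v1 x v2 y c1 c2 d1 d2 \<sigma>1 \<sigma>2.
       valid_Y_choice G1 v1 x \<and> valid_Y_choice G2 v2 y \<and>
       proper_3col G1 c1 \<and> proper_3col G1 c2 \<and> proper_3col G2 d1 \<and> proper_3col G2 d2 \<and>
       bij_betw \<sigma>1 {1,2,3} {1,2,3} \<and> (\<forall>j\<in>{1,2,3}. \<sigma>1 (d1 (y j)) = c1 (x j)) \<and>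
       bij_betw \<sigma>2 {1,2,3} {1,2,3} \<and> (\<forall>j\<in>{1,2,3}. \<sigma>2 (d2 (y j)) = c2 (x j)) \<and>
       kempe_equiv (compY G1 v1 x G2 v2 y) (colY x c1 \<sigma>1 d1) (colY x c2 \<sigma>2 d2)
       \<longrightarrow> kempe_equiv G1 c1 c2 \<and> kempe_equiv G2 d1 d2)
  \<and> (\<forall>x s11 s12 y s21 s22 c1 c2 d1 d2 \<sigma>1 \<sigma>2.
       valid_H_choice G1 x s11 s12 \<and> valid_H_choice G2 y s21 s22 \<and>
       proper_3col G1 c1 \<and> proper_3col G1 c2 \<and> proper_3col G2 d1 \<and> proper_3col G2 d2 \<and>
       bij_betw \<sigma>1 {1,2,3} {1,2,3} \<and> \<sigma>1 (d1 y) = c1 x \<and>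
       bij_betw \<sigma>2 {1,2,3} {1,2,3} \<and> \<sigma>2 (d2 y) = c2 x \<and>
       kempe_equiv (compH G1 x s11 s12 G2 y s21 s22) (colH x c1 \<sigma>1 d1) (colH x c2 \<sigma>2 d2)
       \<longrightarrow> kempe_equiv G1 c1 c2 \<and> kempe_equiv G2 d1 d2)"
proof (rule conjI; intro allI impI)
  fix v1 x v2 y c1 c2 d1 d2 \<sigma>1 \<sigma>2
  assume h: "valid_Y_choice G1 v1 x \<and> valid_Y_choice G2 v2 y \<and>
       proper_3col G1 c1 \<and> proper_3col G1 c2 \<and> proper_3col G2 d1 \<and> proper_3col G2 d2 \<and>
       bij_betw \<sigma>1 {1,2,3} {1,2,3} \<and> (\<forall>j\<in>{1,2,3}. \<sigma>1 (d1 (y j)) = c1 (x j)) \<and>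
       bij_betw \<sigma>2 {1,2,3} {1,2,3} \<and> (\<forall>j\<in>{1,2,3}. \<sigma>2 (d2 (y j)) = c2 (x j)) \<and>
       kempe_equiv (compY G1 v1 x G2 v2 y) (colY x c1 \<sigma>1 d1) (colY x c2 \<sigma>2 d2)"
  have L: "Ycomp G1 v1 x G2 v2 y" using assms(1,2) h by (simp add: Ycomp_def)
  show "kempe_equiv G1 c1 c2 \<and> kempe_equiv G2 d1 d2"
    using Ycomp.Y_main[OF L] h by blast
next
  fix x s11 s12 y s21 s22 c1 c2 d1 d2 \<sigma>1 \<sigma>2
  assume h: "valid_H_choice G1 x s11 s12 \<and> valid_H_choice G2 y s21 s22 \<and>
       proper_3col G1 c1 \<and> proper_3col G1 c2 \<and> proper_3col G2 d1 \<and> proper_3col G2 d2 \<and>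
       bij_betw \<sigma>1 {1,2,3} {1,2,3} \<and> \<sigma>1 (d1 y) = c1 x \<and>
       bij_betw \<sigma>2 {1,2,3} {1,2,3} \<and> \<sigma>2 (d2 y) = c2 x \<and>
       kempe_equiv (compH G1 x s11 s12 G2 y s21 s22) (colH x c1 \<sigma>1 d1) (colH x c2 \<sigma>2 d2)"
  have L: "Hcomp G1 x s11 s12 G2 y s21 s22" using assms(1,2) h by (simp add: Hcomp_def)
  show "kempe_equiv G1 c1 c2 \<and> kempe_equiv G2 d1 d2"
    using Hcomp.H_main[OF L] h by blast
qed


end
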